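(* Let $f=x_0^3+x_1^3+x_2^3-x_3^2(3\lambda_0x_0+3\lambda_1x_1+3\lambda_2x_2-x_3)$ with $\lambda_0,\lambda_1,\lambda_2\in\mathbb{C}^*$ and $2(\lambda_0^{3/2}+\lambda_1^{3/2}+\lambda_2^{3/2})\neq1$ (for every choice of square roots). Then the scheme-theoretic intersection $H(f)\cap X_2$ is supported at the $7$ points $x_0^2-\lambda_0x_3^2,\ x_1^2-\lambda_1x_3^2,\ x_2^2-\lambda_2x_3^2,\ \lambda_1x_0^2-\lambda_0x_1^2,\ \lambda_2x_0^2-\lambda_0x_2^2,\ \lambda_2x_1^2-\lambda_1x_2^2,\ x_3(\lambda_0x_0+\lambda_1x_1+\lambda_2x_2-x_3)$, where the first three are double points and the remaining four are simple points. In particular $f$ lies on the Hessian discriminant.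
   Context: $\mathbb{P}^9$ denotes the projective space of quadratic forms in $x_0,\dots,x_3$; $X_2\subset\mathbb{P}^9$ is the variety of quadratic forms of rank $\le2$ (defined by the $3\times3$ minors of the symmetric coefficient matrix), of degree $10$. For a cubic form $f$ whose four partial derivatives are linearly independent, $H(f)\subset\mathbb{P}^9$ is the projective $3$-plane spanned by $\partial f/\partial x_0,\dots,\partial f/\partial x_3$. $f$ lies on the Hessian discriminant iff $H(f)\cap X_2$ does not consist of $10$ reduced points. *)

theory Defs
  imports Complex_Main "HOL-Library.Poly_Mapping" "HOL-Library.Numeral_Type"
begin

text \<open>Polynomials in four variables over the complex numbers, variables indexed by the
  four-element type 4.  The same type is used both for forms in x0..x3 and for polynomials
  in the homogeneous coordinates a0..a3 of the 3-plane H(f).\<close>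

type_synonym mpoly = "(4 \<Rightarrow>\<^sub>0 nat) \<Rightarrow>\<^sub>0 complex"

definition mconst :: "complex \<Rightarrow> mpoly" where
  "mconst c = Poly_Mapping.single 0 c"

definition mvar :: "4 \<Rightarrow> mpoly" where
  "mvar i = Poly_Mapping.single (Poly_Mapping.single i 1) 1"

definition meval :: "(4 \<Rightarrow> complex) \<Rightarrow> mpoly \<Rightarrow> complex" where
  "meval a p = (\<Sum>m\<in>Poly_Mapping.keys p. Poly_Mapping.lookup p m * (\<Prod>i\<in>(UNIV::4 set). a i ^ Poly_Mapping.lookup (m::4 \<Rightarrow>\<^sub>0 nat) i))"

definition mpderiv :: "4 \<Rightarrow> mpoly \<Rightarrow> mpoly" where
  "mpderiv i p = (\<Sum>m\<in>Poly_Mapping.keys p.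
      Poly_Mapping.single (m - Poly_Mapping.single i 1) (of_nat (Poly_Mapping.lookup m i) * Poly_Mapping.lookup p m))"

text \<open>Symmetric coefficient matrix of a quadratic form q = sum_{i,j} M i j x_i x_j.\<close>
definition qmat :: "mpoly \<Rightarrow> 4 \<Rightarrow> 4 \<Rightarrow> complex" where
  "qmat q i j = (if i = j then Poly_Mapping.lookup q (Poly_Mapping.single i 2)
                 else Poly_Mapping.lookup q (Poly_Mapping.single i 1 + Poly_Mapping.single j 1) / 2)"

definition others :: "4 \<Rightarrow> 4 list" where
  "others r = filter (\<lambda>k. k \<noteq> r) [0, 1, 2, 3]"

definition det3 :: "(4 \<Rightarrow> 4 \<Rightarrow> 'a::comm_ring_1) \<Rightarrow> 4 list \<Rightarrow> 4 list \<Rightarrow> 'a" where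
  "det3 A rs cs =
    (let r0 = rs!0; r1 = rs!1; r2 = rs!2; c0 = cs!0; c1 = cs!1; c2 = cs!2 in
       A r0 c0 * (A r1 c1 * A r2 c2 - A r1 c2 * A r2 c1)
     - A r0 c1 * (A r1 c0 * A r2 c2 - A r1 c2 * A r2 c0)
     + A r0 c2 * (A r1 c0 * A r2 c1 - A r1 c1 * A r2 c0))"

definition minor3 :: "(4 \<Rightarrow> 4 \<Rightarrow> 'a::comm_ring_1) \<Rightarrow> 4 \<Rightarrow> 4 \<Rightarrow> 'a" where
  "minor3 A r c = det3 A (others r) (others c)"

definition rank_le2 :: "mpoly \<Rightarrow> bool" where
  "rank_le2 q \<longleftrightarrow> (\<forall>r c. minor3 (qmat q) r c = 0)"

definition Qpoly :: "mpoly \<Rightarrow> (4 \<Rightarrow> complex) \<Rightarrow> mpoly" where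
  "Qpoly f a = (\<Sum>k\<in>UNIV. mconst (a k) * mpderiv k f)"

definition Hspace :: "mpoly \<Rightarrow> mpoly set" where
  "Hspace f = range (Qpoly f)"

text \<open>Set of (affine representatives of) points of H(f) \<inter> X_2.\<close>
definition hess_points :: "mpoly \<Rightarrow> mpoly set" where
  "hess_points f = {Q. Q \<in> Hspace f \<and> Q \<noteq> 0 \<and> rank_le2 Q}"

definition proj_eq :: "mpoly \<Rightarrow> mpoly \<Rightarrow> bool" where
  "proj_eq P Q \<longleftrightarrow> (\<exists>c. c \<noteq> 0 \<and> Q = mconst c * P)"

text \<open>Scheme structure: restricting the 3x3 minors to H(f), with coordinates a0..a3, gives
  homogeneous polynomials in a: the entries of the coefficient matrix are linear forms in a.\<close>
definition hmat :: "mpoly \<Rightarrow> 4 \<Rightarrow> 4 \<Rightarrow> mpoly" where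
  "hmat f i j = (\<Sum>k\<in>UNIV. mconst (qmat (mpderiv k f) i j) * mvar k)"

definition hess_minors :: "mpoly \<Rightarrow> mpoly set" where
  "hess_minors f = {minor3 (hmat f) r c | r c. True}"

definition ideal_gen :: "mpoly set \<Rightarrow> mpoly set" where
  "ideal_gen G = {p. \<exists>F h. finite F \<and> F \<subseteq> G \<and> p = (\<Sum>g\<in>F. h g * g)}"

definition mpow :: "(4 \<Rightarrow> complex) \<Rightarrow> nat \<Rightarrow> mpoly set" where
  "mpow q N = {\<Prod>i\<in>UNIV. (mvar i - mconst (q i)) ^ e i | e. (\<Sum>i\<in>UNIV. e i) = N}"

definition quot_dim :: "mpoly set \<Rightarrow> nat \<Rightarrow> bool" where
  "quot_dim K k \<longleftrightarrow> (\<exists>B. finite B \<and> card B = k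
      \<and> (\<forall>p. \<exists>c. p - (\<Sum>b\<in>B. mconst (c b) * b) \<in> K)
      \<and> (\<forall>c. (\<Sum>b\<in>B. mconst (c b) * b) \<in> K \<longrightarrow> (\<forall>b\<in>B. c b = 0)))"

text \<open>Length of the local ring of C[a]/(J) at the point q:
  dim_C C[a]/(J + m_q^N) for all sufficiently large N.\<close>
definition local_length :: "mpoly set \<Rightarrow> (4 \<Rightarrow> complex) \<Rightarrow> nat \<Rightarrow> bool" where
  "local_length J q k \<longleftrightarrow> (\<exists>N0. \<forall>N\<ge>N0. quot_dim (ideal_gen (J \<union> mpow q N)) k)"

text \<open>Length at a projective point [a] of the scheme defined by homogeneous J, computed in
  the affine chart a_i = 1 (any chart with a_i \<noteq> 0).\<close>
definition proj_length :: "mpoly set \<Rightarrow> (4 \<Rightarrow> complex) \<Rightarrow> nat \<Rightarrow> bool" where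
  "proj_length J a k \<longleftrightarrow>
     (\<forall>i. a i \<noteq> 0 \<longrightarrow> local_length (insert (mvar i - 1) J) (\<lambda>j. a j / a i) k)"

definition hess_mult :: "mpoly \<Rightarrow> mpoly \<Rightarrow> nat \<Rightarrow> bool" where
  "hess_mult f Q k \<longleftrightarrow> (\<forall>a. Qpoly f a = Q \<longrightarrow> proj_length (hess_minors f) a k)"

definition hessian_discriminant :: "mpoly \<Rightarrow> bool" where
  "hessian_discriminant f \<longleftrightarrow> \<not> (\<exists>S. finite S \<and> card S = 10 \<and> S \<subseteq> hess_points f
      \<and> (\<forall>P\<in>S. \<forall>Q\<in>S. proj_eq P Q \<longrightarrow> P = Q)
      \<and> (\<forall>Q\<in>hess_points f. \<exists>P\<in>S. proj_eq P Q)
      \<and> (\<forall>P\<in>S. hess_mult f P 1))"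

end

theory Submission
  imports Defs
begin


lemma d4: "(0::4) \<noteq> 1 \<and> (0::4) \<noteq> 2 \<and> (0::4) \<noteq> 3 \<and> (1::4) \<noteq> 2 \<and> (1::4) \<noteq> 3 \<and> (2::4)\<noteq>3" by simp
lemma d4s[simp]: "(0::4) \<noteq> 1" "(0::4) \<noteq> 2" "(0::4) \<noteq> 3" "(1::4) \<noteq> 2" "(1::4) \<noteq> 3" "(2::4)\<noteq>3"
  "(1::4) \<noteq> 0" "(2::4) \<noteq> 0" "(3::4) \<noteq> 0" "(2::4) \<noteq> 1" "(3::4) \<noteq> 1" "(3::4)\<noteq>2"
  using d4 by auto

lemma UNIV4: "(UNIV::4 set) = {0,1,2,3}"
proof -
  have c4: "CARD(4) = 4" by simp
  have "card {0::4,1,2,3} = 4" using d4 by simp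
  then show ?thesis using c4 card_subset_eq[OF finite subset_UNIV, of "{0::4,1,2,3}"] by simp
qed

lemma in4: "(i::4) = 0 \<or> i = 1 \<or> i = 2 \<or> i = 3"
  using UNIV_I[of i] unfolding UNIV4 by blast

lemma all4: "(\<forall>i::4. P i) \<longleftrightarrow> P 0 \<and> P 1 \<and> P 2 \<and> P 3"
  using in4 by metis

lemma ex4: "(\<exists>i::4. P i) \<longleftrightarrow> P 0 \<or> P 1 \<or> P 2 \<or> P 3"
  using in4 by metis

lemma sum4: "(\<Sum>i\<in>(UNIV::4 set). g i) = g 0 + g 1 + g 2 + g 3"
  unfolding UNIV4 using d4 by (simp add: add.assoc)

lemma prod4: "(\<Prod>i\<in>(UNIV::4 set). g i) = g 0 * g 1 * g 2 * g 3"
  unfolding UNIV4 using d4 by (simp add: mult.assoc)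

lemma mconst_0[simp]: "mconst 0 = 0" by (simp add: mconst_def)
lemma mconst_1[simp]: "mconst 1 = 1" by (simp add: mconst_def)
lemma mconst_add: "mconst (a + b) = mconst a + mconst b" by (simp add: mconst_def single_add)
lemma mconst_diff: "mconst (a - b) = mconst a - mconst b" by (simp add: mconst_def single_diff)
lemma mconst_uminus: "mconst (- a) = - mconst a" by (simp add: mconst_def single_uminus)
lemma mconst_mult: "mconst (a * b) = mconst a * mconst b" by (simp add: mconst_def mult_single)
lemma mconst_power: "mconst (a ^ n) = mconst a ^ n"
  by (induct n) (simp_all add: mconst_mult)
lemma mconst_numeral[simp]: "mconst (numeral n) = numeral n" by (simp add: mconst_def)

lemma lookup_mconst_mult[simp]: "Poly_Mapping.lookup (mconst c * p) m = c * Poly_Mapping.lookup p m"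
proof -
  have "mconst c * p = Poly_Mapping.map ((*) c) p"
    by (simp add: mconst_def mult_map_scale_conv_mult)
  then show ?thesis by (simp add: map.rep_eq when_def)
qed

lemma ideal_gen_0: "0 \<in> ideal_gen G"
  unfolding ideal_gen_def by (rule CollectI, rule exI[of _ "{}"]) simp

lemma ideal_gen_base: "g \<in> G \<Longrightarrow> g \<in> ideal_gen G"
  unfolding ideal_gen_def by (rule CollectI, rule exI[of _ "{g}"], rule exI[of _ "\<lambda>_. 1"]) simp

lemma ideal_gen_add: assumes "p \<in> ideal_gen G" "q \<in> ideal_gen G" shows "p + q \<in> ideal_gen G"
proof -
  obtain F1 h1 where 1: "finite F1" "F1 \<subseteq> G" "p = (\<Sum>g\<in>F1. h1 g * g)" using assms(1) unfolding ideal_gen_def by auto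
  obtain F2 h2 where 2: "finite F2" "F2 \<subseteq> G" "q = (\<Sum>g\<in>F2. h2 g * g)" using assms(2) unfolding ideal_gen_def by auto
  define h where "h g = (if g \<in> F1 then h1 g else 0) + (if g \<in> F2 then h2 g else 0)" for g
  have e1: "(\<Sum>g\<in>F1 \<union> F2. (if g \<in> F1 then h1 g else 0) * g) = (\<Sum>g\<in>F1. h1 g * g)"
    by (rule sum.mono_neutral_cong_right) (use 1 2 in auto)
  have e2: "(\<Sum>g\<in>F1 \<union> F2. (if g \<in> F2 then h2 g else 0) * g) = (\<Sum>g\<in>F2. h2 g * g)"
    by (rule sum.mono_neutral_cong_right) (use 1 2 in auto)
  have "(\<Sum>g\<in>F1 \<union> F2. h g * g) = p + q"
    unfolding h_def distrib_right sum.distrib e1 e2 1(3) 2(3) ..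
  then show ?thesis unfolding ideal_gen_def using 1 2 by (auto intro!: exI[of _ "F1 \<union> F2"] exI[of _ h])
qed

lemma ideal_gen_mult: assumes "p \<in> ideal_gen G" shows "r * p \<in> ideal_gen G"
proof -
  obtain F1 h1 where 1: "finite F1" "F1 \<subseteq> G" "p = (\<Sum>g\<in>F1. h1 g * g)" using assms(1) unfolding ideal_gen_def by auto
  have "r * p = (\<Sum>g\<in>F1. (r * h1 g) * g)" unfolding 1(3) sum_distrib_left mult.assoc ..
  then show ?thesis unfolding ideal_gen_def using 1(1,2) by (intro CollectI exI conjI)
qed

lemma ideal_gen_mult2: "p \<in> ideal_gen G \<Longrightarrow> p * r \<in> ideal_gen G"
  using ideal_gen_mult[of p G r] by (simp only: mult.commute)

lemma ideal_gen_uminus: "p \<in> ideal_gen G \<Longrightarrow> - p \<in> ideal_gen G"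
  using ideal_gen_mult[of p G "-1"] by simp

lemma ideal_gen_diff: "p \<in> ideal_gen G \<Longrightarrow> q \<in> ideal_gen G \<Longrightarrow> p - q \<in> ideal_gen G"
  using ideal_gen_add[of p G "-q"] ideal_gen_uminus by auto

lemma ideal_gen_mono: "G \<subseteq> H \<Longrightarrow> ideal_gen G \<subseteq> ideal_gen H"
  unfolding ideal_gen_def by blast

lemma ideal_gen_power: "p \<in> ideal_gen G \<Longrightarrow> n > 0 \<Longrightarrow> p ^ n \<in> ideal_gen G"
  by (cases n) (simp_all add: ideal_gen_mult2)


lemma ideal_unit: assumes "x * (mconst c + y) \<in> ideal_gen G" "y ^ N \<in> ideal_gen G" "c \<noteq> 0"
  shows "x \<in> ideal_gen G"
proof -
  define S where "S = (\<Sum>i<N. (-y)^(N - Suc i) * mconst c ^ i)"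
  have id: "mconst c ^ N - (- y) ^ N = (mconst c + y) * S"
    using power_diff_sumr2[of "mconst c" N "-y"] unfolding S_def by simp
  have A: "x * (mconst c + y) * S \<in> ideal_gen G"
    using assms(1) by (rule ideal_gen_mult2)
  have B: "x * (- y) ^ N \<in> ideal_gen G"
  proof -
    have "x * (- y) ^ N = (x * (-1) ^ N) * y ^ N" by (simp only: power_minus[of y N] mult.assoc)
    then show ?thesis using assms(2) ideal_gen_mult by metis
  qed
  have "x * (mconst c + y) * S + x * (- y) ^ N \<in> ideal_gen G"
    using A B by (rule ideal_gen_add)
  moreover have "x * (mconst c + y) * S + x * (- y) ^ N = mconst (c ^ N) * x"
    by (simp only: mult.assoc id[symmetric] mconst_power) (simp add: algebra_simps)
  ultimately have "mconst (inverse (c ^ N)) * (mconst (c ^ N) * x) \<in> ideal_gen G"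
    by (metis ideal_gen_mult)
  then show ?thesis using assms(3) by (simp add: mult.assoc[symmetric] mconst_mult[symmetric])
qed


datatype dual = D complex complex

primrec re :: "dual \<Rightarrow> complex" where "re (D a b) = a"
primrec ep :: "dual \<Rightarrow> complex" where "ep (D a b) = b"

lemma dual_eq_iff: "x = y \<longleftrightarrow> re x = re y \<and> ep x = ep y"
  by (cases x; cases y) auto

instantiation dual :: comm_ring_1
begin
definition "0 = D 0 0"
definition "1 = D 1 0"
definition "x + y = D (re x + re y) (ep x + ep y)"
definition "x - y = D (re x - re y) (ep x - ep y)"
definition "- x = D (- re x) (- ep x)"
definition "x * y = D (re x * re y) (re x * ep y + ep x * re y)"
instance
  by standard (auto simp: dual_eq_iff zero_dual_def one_dual_def plus_dual_def minus_dual_def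
      uminus_dual_def times_dual_def algebra_simps)
end

lemma re_simps[simp]: "re 0 = 0" "re 1 = 1" "re (x + y) = re x + re y" "re (x - y) = re x - re y"
  "re (- x) = - re x" "re (x * y) = re x * re y"
  by (simp_all add: zero_dual_def one_dual_def plus_dual_def minus_dual_def uminus_dual_def times_dual_def)

lemma ep_simps[simp]: "ep 0 = 0" "ep 1 = 0" "ep (x + y) = ep x + ep y" "ep (x - y) = ep x - ep y"
  "ep (- x) = - ep x" "ep (x * y) = re x * ep y + ep x * re y"
  by (simp_all add: zero_dual_def one_dual_def plus_dual_def minus_dual_def uminus_dual_def times_dual_def)

lemma re_numeral[simp]: "re (numeral n) = numeral n"
  by (induct n) (simp_all only: numeral.simps re_simps)
lemma ep_numeral[simp]: "ep (numeral n) = 0"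
  by (induct n) (simp_all only: numeral.simps ep_simps re_simps, simp_all)

lemma re_power[simp]: "re (x ^ n) = re x ^ n"
  by (induct n) simp_all

definition cst :: "complex \<Rightarrow> dual" where "cst c = D c 0"
lemma re_cst[simp]: "re (cst c) = c" and ep_cst[simp]: "ep (cst c) = 0"
  by (simp_all add: cst_def)
lemma cst_0[simp]: "cst 0 = 0" by (simp add: dual_eq_iff)
lemma cst_add: "cst (a + b) = cst a + cst b" and cst_mult: "cst (a * b) = cst a * cst b"
  by (simp_all add: dual_eq_iff)

definition mono :: "(4 \<Rightarrow> dual) \<Rightarrow> (4 \<Rightarrow>\<^sub>0 nat) \<Rightarrow> dual" where
  "mono x m = (\<Prod>i\<in>UNIV. x i ^ Poly_Mapping.lookup m i)"

lemma mono_add: "mono x (m + n) = mono x m * mono x n"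
  by (simp add: mono_def lookup_add power_add prod.distrib)

lemma mono_0[simp]: "mono x 0 = 1" by (simp add: mono_def)

definition ev :: "(4 \<Rightarrow> dual) \<Rightarrow> mpoly \<Rightarrow> dual" where
  "ev x p = (\<Sum>m\<in>Poly_Mapping.keys p. cst (Poly_Mapping.lookup p m) * mono x m)"

lemma ev_superset: assumes "finite S" "Poly_Mapping.keys p \<subseteq> S"
  shows "ev x p = (\<Sum>m\<in>S. cst (Poly_Mapping.lookup p m) * mono x m)"
  unfolding ev_def
  by (rule sum.mono_neutral_left) (use assms in \<open>auto simp: in_keys_iff\<close>)

lemma ev_add: "ev x (p + q) = ev x p + ev x q"
proof -
  let ?S = "Poly_Mapping.keys p \<union> Poly_Mapping.keys q"
  have f: "finite ?S" by simp
  have "ev x (p + q) = (\<Sum>m\<in>?S. cst (Poly_Mapping.lookup (p+q) m) * mono x m)"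
    by (rule ev_superset[OF f]) (rule keys_add)
  also have "\<dots> = (\<Sum>m\<in>?S. cst (Poly_Mapping.lookup p m) * mono x m) + (\<Sum>m\<in>?S. cst (Poly_Mapping.lookup q m) * mono x m)"
    by (simp add: lookup_add cst_add distrib_right sum.distrib)
  also have "\<dots> = ev x p + ev x q"
    by (simp add: ev_superset[OF f, symmetric])
  finally show ?thesis .
qed

lemma ev_0[simp]: "ev x 0 = 0" by (simp add: ev_def)

lemma ev_single: "ev x (Poly_Mapping.single m c) = cst c * mono x m"
  by (simp add: ev_def)

lemma update_single: "a \<notin> Poly_Mapping.keys f \<Longrightarrow> Poly_Mapping.update a b f = Poly_Mapping.single a b + f"
  by (rule poly_mapping_eqI) (auto simp: lookup_update lookup_add lookup_single in_keys_iff when_def)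

lemma mpoly_induct: assumes "P 0" "\<And>m c p. P p \<Longrightarrow> P (Poly_Mapping.single m c + p)"
  shows "P (p::mpoly)"
  by (induct p rule: update_induct) (simp_all add: update_single assms)

lemma ev_mult_single: "ev x (Poly_Mapping.single m c * q) = cst c * mono x m * ev x q"
proof (induct q rule: mpoly_induct)
  case 1 then show ?case by simp
next
  case (2 m' c' p)
  then show ?case
    by (simp add: distrib_left ev_add mult_single ev_single cst_mult mono_add algebra_simps)
qed

lemma ev_mult: "ev x (p * q) = ev x p * ev x q"
proof (induct p rule: mpoly_induct)
  case 1 then show ?case by simp
next
  case (2 m c p)
  then show ?case
    by (simp add: distrib_right ev_add ev_mult_single ev_single)
qed

lemma ev_uminus: "ev x (- p) = - ev x p"
  using ev_add[of x p "-p"] by (simp add: eq_neg_iff_add_eq_0 add.commute)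

lemma ev_diff: "ev x (p - q) = ev x p - ev x q"
  using ev_add[of x p "-q"] ev_uminus[of x q] by simp

lemma ev_1[simp]: "ev x 1 = 1"
  using ev_single[of x 0 1] by (simp add: cst_def one_dual_def[symmetric])

lemma ev_power: "ev x (p ^ n) = ev x p ^ n"
  by (induct n) (simp_all add: ev_mult)

lemma ev_mconst[simp]: "ev x (mconst c) = cst c"
  by (simp add: mconst_def ev_single)

lemma ev_mvar[simp]: "ev x (mvar i) = x i"
proof -
  have "mono x (Poly_Mapping.single i 1) = x i"
    unfolding mono_def
    by (subst prod.remove[of _ i]) (auto simp: lookup_single when_def intro!: prod.neutral)
  then show ?thesis by (simp add: mvar_def ev_single cst_def one_dual_def[symmetric])
qed

lemma ev_sum: "ev x (sum g A) = (\<Sum>a\<in>A. ev x (g a))"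
  by (induct A rule: infinite_finite_induct) (simp_all add: ev_add)

lemma ev_prod: "ev x (prod g A) = (\<Prod>a\<in>A. ev x (g a))"
  by (induct A rule: infinite_finite_induct) (simp_all add: ev_mult)

lemma ev_numeral[simp]: "ev x (numeral n) = numeral n"
  using ev_mconst[of x "numeral n"] by (simp add: dual_eq_iff)

lemma ev_ideal: assumes "\<forall>g\<in>G. ev x g = 0" "p \<in> ideal_gen G" shows "ev x p = 0"
proof -
  obtain F h where "finite F" "F \<subseteq> G" "p = (\<Sum>g\<in>F. h g * g)" using assms(2) unfolding ideal_gen_def by auto
  then show ?thesis using assms(1) by (auto simp: ev_sum ev_mult intro!: sum.neutral)
qed


lemma mvar_power: "mvar i ^ n = Poly_Mapping.single (Poly_Mapping.single i n) 1"
  by (induct n) (simp_all add: mvar_def mult_single single_add[symmetric] add.commute)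

lemma prod_mvar_power: "finite A \<Longrightarrow> (\<Prod>i\<in>A. mvar i ^ n i) = Poly_Mapping.single (\<Sum>i\<in>A. Poly_Mapping.single i (n i)) 1"
  by (induct A rule: finite_induct) (simp_all add: mvar_power mult_single)

lemma mono_expand: "(\<Sum>i\<in>(UNIV::4 set). Poly_Mapping.single i (Poly_Mapping.lookup m i)) = m"
  by (rule poly_mapping_eqI) (simp add: lookup_sum lookup_single when_def)

lemma single_as_prod: "Poly_Mapping.single m c = mconst c * (\<Prod>i\<in>UNIV. mvar i ^ Poly_Mapping.lookup m i)"
  by (simp add: prod_mvar_power mono_expand mconst_def mult_single)

lemma mpoly_gen: assumes "\<And>c. S (mconst c)" "\<And>i. S (mvar i)" "\<And>p q. S p \<Longrightarrow> S q \<Longrightarrow> S (p + q)"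
  "\<And>p q. S p \<Longrightarrow> S q \<Longrightarrow> S (p * q)"
  shows "S p"
proof -
  have pw: "S (r ^ n)" if "S r" for r n
    using that by (induct n) (use assms(1)[of 1] assms(4) in auto)
  have pr: "S (\<Prod>i\<in>A. g i)" if "finite A" "\<And>i. S (g i)" for A and g :: "4 \<Rightarrow> mpoly"
    using that by (induct A rule: finite_induct) (use assms(1)[of 1] assms(4) in auto)
  show ?thesis
  proof (induct p rule: mpoly_induct)
    case 1 then show ?case using assms(1)[of 0] by simp
  next
    case (2 m c p)
    have "S (Poly_Mapping.single m c)"
      unfolding single_as_prod by (intro assms(4) assms(1) pr pw assms(2)) simp_all
    then show ?case using 2 assms(3) by blast
  qed
qed

lemma mconst_neq_mvar: "1 \<noteq> mvar k"
proof
  assume "1 = mvar k"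
  then have "Poly_Mapping.lookup (1::mpoly) 0 = Poly_Mapping.lookup (mvar k) 0" by simp
  moreover have "Poly_Mapping.single k (1::nat) \<noteq> 0" by (metis lookup_single_eq lookup_zero zero_neq_one)
  ultimately show False by (simp add: mvar_def lookup_single when_def)
qed

lemma quot_dim_1:
  assumes vars: "\<And>i. mvar i - mconst (q i) \<in> ideal_gen G"
    and van: "\<And>g. g \<in> G \<Longrightarrow> ev (\<lambda>i. cst (q i)) g = 0"
  shows "quot_dim (ideal_gen G) 1"
  unfolding quot_dim_def
proof (intro exI[of _ "{1}"] conjI allI impI)
  let ?K = "ideal_gen G"
  fix p
  have "\<exists>c. p - mconst c \<in> ?K"
  proof (induct p rule: mpoly_gen)
    case (1 c) then show ?case by (intro exI[of _ c]) (simp add: ideal_gen_0)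
  next
    case (2 i) then show ?case using vars by blast
  next
    case (3 p q)
    then obtain c d where "p - mconst c \<in> ?K" "q - mconst d \<in> ?K" by blast
    then have "(p - mconst c) + (q - mconst d) \<in> ?K" by (rule ideal_gen_add)
    then show ?case by (intro exI[of _ "c + d"]) (simp add: mconst_add algebra_simps)
  next
    case (4 p q)
    then obtain c d where a: "p - mconst c \<in> ?K" "q - mconst d \<in> ?K" by blast
    have "(p - mconst c) * q + mconst c * (q - mconst d) \<in> ?K"
      using a by (intro ideal_gen_add ideal_gen_mult ideal_gen_mult2)
    then show ?case by (intro exI[of _ "c * d"]) (simp add: mconst_mult algebra_simps)
  qed
  then show "\<exists>c. p - (\<Sum>b\<in>{1}. mconst (c b) * b) \<in> ?K" by auto
next
  fix c :: "mpoly \<Rightarrow> complex"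
  assume a: "(\<Sum>b\<in>{1}. mconst (c b) * b) \<in> ideal_gen G"
  have v: "\<forall>g\<in>G. ev (\<lambda>i. cst (q i)) g = 0" using van by blast
  have "ev (\<lambda>i. cst (q i)) (\<Sum>b\<in>{1}. mconst (c b) * b) = 0" by (rule ev_ideal[OF v a])
  then have "ev (\<lambda>i. cst (q i)) (mconst (c 1)) = 0" by simp
  then show "\<forall>b\<in>{1}. c b = 0" by (simp add: cst_def zero_dual_def)
qed simp_all

lemma quot_dim_2:
  assumes vars: "\<And>i. i \<noteq> k \<Longrightarrow> mvar i - mconst (q i) \<in> ideal_gen G"
    and sq: "(mvar k - mconst (q k))^2 \<in> ideal_gen G"
    and van: "\<And>g. g \<in> G \<Longrightarrow> ev (\<lambda>i. if i = k then D (q k) 1 else cst (q i)) g = 0"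
  shows "quot_dim (ideal_gen G) 2"
  unfolding quot_dim_def
proof (intro exI[of _ "{1, mvar k}"] conjI allI impI)
  let ?K = "ideal_gen G"
  let ?t = "mvar k - mconst (q k)"
  fix p
  have "\<exists>c d. p - (mconst c + mconst d * ?t) \<in> ?K"
  proof (induct p rule: mpoly_gen)
    case (1 c) then show ?case by (intro exI[of _ c] exI[of _ 0]) (simp add: ideal_gen_0)
  next
    case (2 i)
    show ?case
    proof (cases "i = k")
      case True then show ?thesis by (intro exI[of _ "q k"] exI[of _ 1]) (simp add: ideal_gen_0)
    next
      case False then show ?thesis using vars[of i] by (intro exI[of _ "q i"] exI[of _ 0]) simp
    qed
  next
    case (3 p q)
    then obtain c d c' d' where "p - (mconst c + mconst d * ?t) \<in> ?K" "q - (mconst c' + mconst d' * ?t) \<in> ?K" by blast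
    then have "(p - (mconst c + mconst d * ?t)) + (q - (mconst c' + mconst d' * ?t)) \<in> ?K" by (rule ideal_gen_add)
    then show ?case by (intro exI[of _ "c + c'"] exI[of _ "d + d'"]) (simp add: mconst_add algebra_simps)
  next
    case (4 p q)
    then obtain c d c' d' where a: "p - (mconst c + mconst d * ?t) \<in> ?K" "q - (mconst c' + mconst d' * ?t) \<in> ?K" by blast
    have "(p - (mconst c + mconst d * ?t)) * q + (mconst c + mconst d * ?t) * (q - (mconst c' + mconst d' * ?t))
       + mconst (d * d') * ?t^2 \<in> ?K"
      using a sq by (intro ideal_gen_add ideal_gen_mult ideal_gen_mult2)
    moreover have "(p - (mconst c + mconst d * ?t)) * q + (mconst c + mconst d * ?t) * (q - (mconst c' + mconst d' * ?t))
       + mconst (d * d') * ?t^2 = p * q - (mconst (c * c') + mconst (c * d' + d * c') * ?t)"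
      unfolding mconst_mult mconst_add power2_eq_square by algebra
    ultimately show ?case by (intro exI[of _ "c * c'"] exI[of _ "c * d' + d * c'"]) simp
  qed
  then obtain c d where cd: "p - (mconst c + mconst d * ?t) \<in> ?K" by blast
  have ne: "1 \<noteq> mvar k" by (rule mconst_neq_mvar)
  let ?f = "\<lambda>b. if b = 1 then c - d * q k else d"
  have eq: "(\<Sum>b\<in>{1, mvar k}. mconst (?f b) * b) = mconst c + mconst d * ?t"
    using ne by (simp add: mconst_diff mconst_mult algebra_simps)
  show "\<exists>c. p - (\<Sum>b\<in>{1, mvar k}. mconst (c b) * b) \<in> ?K"
  proof (rule exI[of _ ?f])
    show "p - (\<Sum>b\<in>{1, mvar k}. mconst (?f b) * b) \<in> ?K" unfolding eq by (rule cd)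
  qed
next
  fix c :: "mpoly \<Rightarrow> complex"
  let ?x = "\<lambda>i. if i = k then D (q k) 1 else cst (q i)"
  have ne: "1 \<noteq> mvar k" by (rule mconst_neq_mvar)
  assume a: "(\<Sum>b\<in>{1, mvar k}. mconst (c b) * b) \<in> ideal_gen G"
  have v: "\<forall>g\<in>G. ev ?x g = 0" using van by blast
  have "ev ?x (\<Sum>b\<in>{1, mvar k}. mconst (c b) * b) = 0" by (rule ev_ideal[OF v a])
  then have "cst (c 1) + cst (c (mvar k)) * D (q k) 1 = 0" using ne by (simp add: ev_add ev_mult)
  then show "\<forall>b\<in>{1, mvar k}. c b = 0" by (auto simp: dual_eq_iff)
next
  show "card {1, mvar k} = 2" using mconst_neq_mvar[of k] by simp
qed simp

lemma mpow_mem: "(mvar i - mconst (q i)) ^ N \<in> mpow q N"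
proof -
  let ?e = "\<lambda>j. if j = i then N else 0"
  have "(\<Prod>j\<in>UNIV. (mvar j - mconst (q j)) ^ ?e j) = (mvar i - mconst (q i)) ^ N"
    by (subst prod.remove[of _ i]) (auto intro!: prod.neutral)
  moreover have "(\<Sum>j\<in>UNIV. ?e j) = N" by simp
  ultimately show ?thesis unfolding mpow_def by (intro CollectI exI[of _ ?e]) simp
qed

lemma nil_prod: assumes "finite A" "\<forall>i\<in>A. re (y i) = 0"
  shows "(sum e A \<ge> 1 \<longrightarrow> re (\<Prod>i\<in>A. y i ^ e i) = 0) \<and> (sum e A \<ge> 2 \<longrightarrow> (\<Prod>i\<in>A. y i ^ e i) = 0)"
  using assms
proof (induct A rule: finite_induct)
  case empty then show ?case by simp
next
  case (insert a A)
  have ya: "re (y a) = 0" using insert by simp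
  have pw: "(e a \<ge> 1 \<longrightarrow> re (y a ^ e a) = 0) \<and> (e a \<ge> 2 \<longrightarrow> y a ^ e a = 0)"
  proof (cases "e a")
    case 0 then show ?thesis by simp
  next
    case (Suc n)
    have "y a ^ Suc (Suc m) = 0" for m
    proof -
      have "y a * y a = 0" using ya by (simp add: dual_eq_iff)
      then show ?thesis by (simp add: power_Suc mult.assoc[symmetric])
    qed
    then show ?thesis using Suc ya by (cases n) auto
  qed
  have IH: "(sum e A \<ge> 1 \<longrightarrow> re (\<Prod>i\<in>A. y i ^ e i) = 0) \<and> (sum e A \<ge> 2 \<longrightarrow> (\<Prod>i\<in>A. y i ^ e i) = 0)"
    using insert by simp
  have prod: "(\<Prod>i\<in>insert a A. y i ^ e i) = y a ^ e a * (\<Prod>i\<in>A. y i ^ e i)" using insert by simp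
  have sum: "sum e (insert a A) = e a + sum e A" using insert by simp
  show ?case
  proof (intro conjI impI)
    assume "1 \<le> sum e (insert a A)"
    then have "e a \<ge> 1 \<or> sum e A \<ge> 1" using sum by linarith
    then show "re (\<Prod>i\<in>insert a A. y i ^ e i) = 0" using pw IH prod by auto
  next
    assume "2 \<le> sum e (insert a A)"
    then have "e a \<ge> 2 \<or> sum e A \<ge> 2 \<or> (e a \<ge> 1 \<and> sum e A \<ge> 1)" using sum by linarith
    moreover have "u * v = 0" if "re u = 0" "re v = 0" for u v :: dual
      using that by (simp add: dual_eq_iff)
    ultimately show "(\<Prod>i\<in>insert a A. y i ^ e i) = 0" using pw IH prod by auto
  qed
qed

lemma ev_mpow: assumes "g \<in> mpow q N" "N \<ge> 2" "\<And>i. re (x i) = q i"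
  shows "ev x g = 0"
proof -
  obtain e where e: "g = (\<Prod>i\<in>UNIV. (mvar i - mconst (q i)) ^ e i)" "sum e UNIV = N"
    using assms(1) unfolding mpow_def by blast
  have "ev x g = (\<Prod>i\<in>UNIV. (x i - cst (q i)) ^ e i)"
    using e by (simp add: ev_prod ev_power ev_diff)
  also have "\<dots> = 0"
    using nil_prod[of UNIV "\<lambda>i. x i - cst (q i)" e] assms(2,3) e(2) by simp
  finally show ?thesis .
qed


lemma mpderiv_superset: assumes "finite S" "Poly_Mapping.keys p \<subseteq> S"
  shows "mpderiv k p = (\<Sum>m\<in>S. Poly_Mapping.single (m - Poly_Mapping.single k 1) (of_nat (Poly_Mapping.lookup m k) * Poly_Mapping.lookup p m))"
  unfolding mpderiv_def
  by (rule sum.mono_neutral_left) (use assms in \<open>auto simp: in_keys_iff\<close>)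

lemma mpderiv_add: "mpderiv k (p + q) = mpderiv k p + mpderiv k q"
proof -
  let ?S = "Poly_Mapping.keys p \<union> Poly_Mapping.keys q"
  have f: "finite ?S" by simp
  show ?thesis
    by (simp add: mpderiv_superset[OF f keys_add] mpderiv_superset[OF f, of p] mpderiv_superset[OF f, of q]
        lookup_add distrib_left single_add sum.distrib)
qed

lemma mpderiv_0[simp]: "mpderiv k 0 = 0" by (simp add: mpderiv_def)

lemma mpderiv_single: "mpderiv k (Poly_Mapping.single m c) =
   Poly_Mapping.single (m - Poly_Mapping.single k 1) (of_nat (Poly_Mapping.lookup m k) * c)"
  by (simp add: mpderiv_def)

lemma mpderiv_uminus: "mpderiv k (- p) = - mpderiv k p"
  using mpderiv_add[of k p "-p"] by (simp add: eq_neg_iff_add_eq_0 add.commute)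

lemma mpderiv_diff: "mpderiv k (p - q) = mpderiv k p - mpderiv k q"
  using mpderiv_add[of k p "-q"] mpderiv_uminus[of k q] by simp

lemma mpderiv_single_mult_single:
  "mpderiv k (Poly_Mapping.single m c * Poly_Mapping.single n d) =
    mpderiv k (Poly_Mapping.single m c) * Poly_Mapping.single n d + Poly_Mapping.single m c * mpderiv k (Poly_Mapping.single n d)"
proof -
  have A: "Poly_Mapping.single (m + n - Poly_Mapping.single k 1) (of_nat (Poly_Mapping.lookup m k) * (c * d))
     = Poly_Mapping.single (m - Poly_Mapping.single k 1 + n) (of_nat (Poly_Mapping.lookup m k) * c * d)"
  proof (cases "Poly_Mapping.lookup m k = 0")
    case True then show ?thesis by simp
  next
    case False
    have "m + n - Poly_Mapping.single k 1 = m - Poly_Mapping.single k 1 + n"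
      using False by (intro poly_mapping_eqI) (auto simp: lookup_add lookup_minus lookup_single when_def)
    then show ?thesis by (simp add: mult.assoc)
  qed
  have B: "Poly_Mapping.single (m + n - Poly_Mapping.single k 1) (of_nat (Poly_Mapping.lookup n k) * (c * d))
     = Poly_Mapping.single (m + (n - Poly_Mapping.single k 1)) (c * (of_nat (Poly_Mapping.lookup n k) * d))"
  proof (cases "Poly_Mapping.lookup n k = 0")
    case True then show ?thesis by simp
  next
    case False
    have "m + n - Poly_Mapping.single k 1 = m + (n - Poly_Mapping.single k 1)"
      using False by (intro poly_mapping_eqI) (auto simp: lookup_add lookup_minus lookup_single when_def)
    then show ?thesis by (simp add: mult.left_commute)
  qed
  show ?thesis
    by (simp only: mult_single mpderiv_single lookup_add of_nat_add distrib_right single_add A B)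
qed

lemma mpderiv_mult_single: "mpderiv k (Poly_Mapping.single m c * q) =
    mpderiv k (Poly_Mapping.single m c) * q + Poly_Mapping.single m c * mpderiv k q"
proof (induct q rule: mpoly_induct)
  case 1 then show ?case by simp
next
  case (2 n d p)
  then show ?case by (simp add: distrib_left distrib_right mpderiv_add mpderiv_single_mult_single)
qed

lemma mpderiv_mult: "mpderiv k (p * q) = mpderiv k p * q + p * mpderiv k q"
proof (induct p rule: mpoly_induct)
  case 1 then show ?case by simp
next
  case (2 n d p)
  then show ?case by (simp add: distrib_left distrib_right mpderiv_add mpderiv_mult_single)
qed

lemma mpderiv_mconst[simp]: "mpderiv k (mconst c) = 0"
  by (simp add: mconst_def mpderiv_single)

lemma mpderiv_mvar: "mpderiv k (mvar i) = (if i = k then 1 else 0)"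
  by (simp add: mvar_def mpderiv_single lookup_single when_def)

lemma mpderiv_power: "mpderiv k (p ^ Suc n) = of_nat (Suc n) * p ^ n * mpderiv k p"
  by (induct n) (simp_all add: mpderiv_mult algebra_simps)

lemma mpderiv_numeral[simp]: "mpderiv k (numeral n) = 0"
  using mpderiv_mconst[of k "numeral n"] by simp

lemma mpderiv_1[simp]: "mpderiv k 1 = 0"
  using mpderiv_mconst[of k 1] by simp


definition mon :: "nat \<Rightarrow> nat \<Rightarrow> nat \<Rightarrow> nat \<Rightarrow> (4 \<Rightarrow>\<^sub>0 nat)" where
  "mon a b c d = Poly_Mapping.single 0 a + Poly_Mapping.single 1 b + Poly_Mapping.single 2 c + Poly_Mapping.single 3 d"

lemma lookup_mon: "Poly_Mapping.lookup (mon a b c d) i = (if i = 0 then a else if i = 1 then b else if i = 2 then c else d)"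
  using in4[of i] by (auto simp: mon_def lookup_add lookup_single)

lemma mon_eq_iff[simp]: "mon a b c d = mon a' b' c' d' \<longleftrightarrow> a = a' \<and> b = b' \<and> c = c' \<and> d = d'"
proof
  assume "mon a b c d = mon a' b' c' d'"
  then have "\<forall>i. Poly_Mapping.lookup (mon a b c d) i = Poly_Mapping.lookup (mon a' b' c' d') i" by simp
  then show "a = a' \<and> b = b' \<and> c = c' \<and> d = d'" unfolding lookup_mon by (metis d4s)
qed simp

lemma mon_0[simp]: "mon 0 0 0 0 = 0" by (simp add: mon_def)

lemma mon_eq_0_iff[simp]: "mon a b c d = 0 \<longleftrightarrow> a = 0 \<and> b = 0 \<and> c = 0 \<and> d = 0"
  "0 = mon a b c d \<longleftrightarrow> a = 0 \<and> b = 0 \<and> c = 0 \<and> d = 0"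
  using mon_eq_iff[of a b c d 0 0 0 0] by auto

lemma mon_add[simp]: "mon a b c d + mon a' b' c' d' = mon (a+a') (b+b') (c+c') (d+d')"
  by (rule poly_mapping_eqI) (simp add: lookup_add lookup_mon)

lemma mon_diff[simp]: "mon a b c d - mon a' b' c' d' = mon (a-a') (b-b') (c-c') (d-d')"
  by (rule poly_mapping_eqI) (simp add: lookup_minus lookup_mon)

lemma single_mon[simp]: "Poly_Mapping.single (0::4) n = mon n 0 0 0" "Poly_Mapping.single (1::4) n = mon 0 n 0 0"
  "Poly_Mapping.single (2::4) n = mon 0 0 n 0" "Poly_Mapping.single (3::4) n = mon 0 0 0 n"
  by (rule poly_mapping_eqI; use in4 in \<open>auto simp add: lookup_mon lookup_single when_def\<close>)+

lemma mvar_mon: "mvar 0 = Poly_Mapping.single (mon 1 0 0 0) 1" "mvar 1 = Poly_Mapping.single (mon 0 1 0 0) 1"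
  "mvar 2 = Poly_Mapping.single (mon 0 0 1 0) 1" "mvar 3 = Poly_Mapping.single (mon 0 0 0 1) 1"
  by (simp_all add: mvar_def)

lemma mconst_single: "mconst c = Poly_Mapping.single 0 c" by (simp add: mconst_def)

lemmas lk_simps = mvar_mon mconst_single mult_single lookup_add lookup_minus lookup_single when_def
  distrib_left distrib_right left_diff_distrib right_diff_distrib power2_eq_square


definition kk :: "'a \<Rightarrow> 'a \<Rightarrow> 'a \<Rightarrow> 4 \<Rightarrow> 'a" where
  "kk k0 k1 k2 i = (if i = 0 then k0 else if i = 1 then k1 else k2)"

definition Mg :: "(4 \<Rightarrow> 'a::comm_ring_1) \<Rightarrow> 'a \<Rightarrow> 'a \<Rightarrow> 'a \<Rightarrow> 4 \<Rightarrow> 4 \<Rightarrow> 'a" where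
  "Mg a k0 k1 k2 i j = (if i = 3 \<and> j = 3 then a 3 - (k0 * a 0 + k1 * a 1 + k2 * a 2)
     else if i = 3 then - (kk k0 k1 k2 j * a 3) else if j = 3 then - (kk k0 k1 k2 i * a 3)
     else if i = j then a i else 0)"

lemma mpderiv_sq: "mpderiv k (p ^ 2) = 2 * p * mpderiv k p"
  using mpderiv_power[of k p 1] by (simp add: numeral_2_eq_2)
lemma mpderiv_cube: "mpderiv k (p ^ 3) = 3 * p ^ 2 * mpderiv k p"
  using mpderiv_power[of k p 2] by (simp add: numeral_3_eq_3)

lemma qmat_add: "qmat (p + q) i j = qmat p i j + qmat q i j"
  by (simp add: qmat_def lookup_add add_divide_distrib)
lemma qmat_diff: "qmat (p - q) i j = qmat p i j - qmat q i j"
  by (simp add: qmat_def lookup_minus diff_divide_distrib)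
lemma qmat_uminus: "qmat (- p) i j = - qmat p i j"
  by (simp add: qmat_def)
lemma qmat_mconst: "qmat (mconst c * p) i j = c * qmat p i j"
  by (simp add: qmat_def)

locale setting =
  fixes l0 l1 l2 :: complex
  assumes nz: "l0 \<noteq> 0" "l1 \<noteq> 0" "l2 \<noteq> 0"
begin

definition fp :: mpoly where
  "fp = mvar 0 ^ 3 + mvar 1 ^ 3 + mvar 2 ^ 3
             - mvar 3 ^ 2 * (mconst (3 * l0) * mvar 0 + mconst (3 * l1) * mvar 1
                             + mconst (3 * l2) * mvar 2 - mvar 3)"

definition "P0 = mvar 0 ^ 2 - mconst l0 * mvar 3 ^ 2"
definition "P1 = mvar 1 ^ 2 - mconst l1 * mvar 3 ^ 2"
definition "P2 = mvar 2 ^ 2 - mconst l2 * mvar 3 ^ 2"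
definition "P6 = mvar 3 * (mconst (2 * l0) * mvar 0 + mconst (2 * l1) * mvar 1
                          + mconst (2 * l2) * mvar 2 - mvar 3)"

lemma d0: "mpderiv 0 fp = mconst 3 * P0"
  unfolding fp_def P0_def mconst_mult
  by (simp add: mpderiv_add mpderiv_diff mpderiv_mult mpderiv_mvar mpderiv_sq mpderiv_cube algebra_simps)


lemma d1: "mpderiv 1 fp = mconst 3 * P1"
  unfolding fp_def P1_def mconst_mult
  by (simp add: mpderiv_add mpderiv_diff mpderiv_mult mpderiv_mvar mpderiv_sq mpderiv_cube algebra_simps)

lemma d2: "mpderiv 2 fp = mconst 3 * P2"
  unfolding fp_def P2_def mconst_mult
  by (simp add: mpderiv_add mpderiv_diff mpderiv_mult mpderiv_mvar mpderiv_sq mpderiv_cube algebra_simps)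

lemma d3: "mpderiv 3 fp = - (mconst 3 * P6)"
  unfolding fp_def P6_def mconst_mult
  by (simp add: mpderiv_add mpderiv_diff mpderiv_mult mpderiv_mvar mpderiv_sq mpderiv_cube algebra_simps power2_eq_square)

lemma qP0: "qmat P0 i j = (if i = 0 \<and> j = 0 then 1 else if i = 3 \<and> j = 3 then - l0 else 0)"
  using in4[of i] in4[of j] by (elim disjE) (simp_all add: qmat_def P0_def lk_simps)
lemma qP1: "qmat P1 i j = (if i = 1 \<and> j = 1 then 1 else if i = 3 \<and> j = 3 then - l1 else 0)"
  using in4[of i] in4[of j] by (elim disjE) (simp_all add: qmat_def P1_def lk_simps)
lemma qP2: "qmat P2 i j = (if i = 2 \<and> j = 2 then 1 else if i = 3 \<and> j = 3 then - l2 else 0)"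
  using in4[of i] in4[of j] by (elim disjE) (simp_all add: qmat_def P2_def lk_simps)
lemma qP6: "qmat P6 i j = (if i = 3 \<and> j = 3 then -1 else if i = 3 then kk l0 l1 l2 j else if j = 3 then kk l0 l1 l2 i else 0)"
  using in4[of i] in4[of j] by (elim disjE) (simp_all add: qmat_def P6_def lk_simps kk_def)


lemma hmat_eq: "hmat fp i j = mconst 3 * Mg mvar (mconst l0) (mconst l1) (mconst l2) i j"
  unfolding hmat_def sum4 d0 d1 d2 d3 qmat_mconst qmat_uminus
  using in4[of i] in4[of j] by (elim disjE) (simp_all add: qP0 qP1 qP2 qP6 Mg_def kk_def mconst_mult mconst_uminus algebra_simps)

lemma Qpoly_eq: "Qpoly fp a = mconst (3 * a 0) * P0 + mconst (3 * a 1) * P1 + mconst (3 * a 2) * P2 - mconst (3 * a 3) * P6"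
  unfolding Qpoly_def sum4 d0 d1 d2 d3 mconst_mult by (simp add: algebra_simps)

lemma qmat_Qpoly: "qmat (Qpoly fp a) i j = 3 * Mg a l0 l1 l2 i j"
  unfolding Qpoly_eq qmat_add qmat_diff qmat_mconst
  using in4[of i] in4[of j] by (elim disjE) (simp_all add: qP0 qP1 qP2 qP6 Mg_def kk_def algebra_simps)

end

lemma minor_0_0: "minor3 (Mg a k0 k1 k2) 0 0 = - (a 2) * (a 3)^2 * k1^2 - (a 1) * (a 3)^2 * k2^2 + (a 1) * (a 2) * (a 3) - (a 1) * (a 2)^2 * k2 - (a 1)^2 * (a 2) * k1 - (a 0) * (a 1) * (a 2) * k0"
  by (simp add: minor3_def det3_def others_def Mg_def kk_def Let_def algebra_simps power2_eq_square power3_eq_cube)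

lemma minor_0_1: "minor3 (Mg a k0 k1 k2) 0 1 = - (a 2) * (a 3)^2 * k0 * k1"
  by (simp add: minor3_def det3_def others_def Mg_def kk_def Let_def algebra_simps power2_eq_square power3_eq_cube)

lemma minor_0_2: "minor3 (Mg a k0 k1 k2) 0 2 = (a 1) * (a 3)^2 * k0 * k2"
  by (simp add: minor3_def det3_def others_def Mg_def kk_def Let_def algebra_simps power2_eq_square power3_eq_cube)

lemma minor_0_3: "minor3 (Mg a k0 k1 k2) 0 3 = - (a 1) * (a 2) * (a 3) * k0"
  by (simp add: minor3_def det3_def others_def Mg_def kk_def Let_def algebra_simps power2_eq_square power3_eq_cube)

lemma minor_1_0: "minor3 (Mg a k0 k1 k2) 1 0 = - (a 2) * (a 3)^2 * k0 * k1"
  by (simp add: minor3_def det3_def others_def Mg_def kk_def Let_def algebra_simps power2_eq_square power3_eq_cube)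

lemma minor_1_1: "minor3 (Mg a k0 k1 k2) 1 1 = - (a 2) * (a 3)^2 * k0^2 - (a 0) * (a 3)^2 * k2^2 + (a 0) * (a 2) * (a 3) - (a 0) * (a 2)^2 * k2 - (a 0) * (a 1) * (a 2) * k1 - (a 0)^2 * (a 2) * k0"
  by (simp add: minor3_def det3_def others_def Mg_def kk_def Let_def algebra_simps power2_eq_square power3_eq_cube)

lemma minor_1_2: "minor3 (Mg a k0 k1 k2) 1 2 = - (a 0) * (a 3)^2 * k1 * k2"
  by (simp add: minor3_def det3_def others_def Mg_def kk_def Let_def algebra_simps power2_eq_square power3_eq_cube)

lemma minor_1_3: "minor3 (Mg a k0 k1 k2) 1 3 = (a 0) * (a 2) * (a 3) * k1"
  by (simp add: minor3_def det3_def others_def Mg_def kk_def Let_def algebra_simps power2_eq_square power3_eq_cube)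

lemma minor_2_0: "minor3 (Mg a k0 k1 k2) 2 0 = (a 1) * (a 3)^2 * k0 * k2"
  by (simp add: minor3_def det3_def others_def Mg_def kk_def Let_def algebra_simps power2_eq_square power3_eq_cube)

lemma minor_2_1: "minor3 (Mg a k0 k1 k2) 2 1 = - (a 0) * (a 3)^2 * k1 * k2"
  by (simp add: minor3_def det3_def others_def Mg_def kk_def Let_def algebra_simps power2_eq_square power3_eq_cube)

lemma minor_2_2: "minor3 (Mg a k0 k1 k2) 2 2 = - (a 1) * (a 3)^2 * k0^2 - (a 0) * (a 3)^2 * k1^2 + (a 0) * (a 1) * (a 3) - (a 0) * (a 1) * (a 2) * k2 - (a 0) * (a 1)^2 * k1 - (a 0)^2 * (a 1) * k0"
  by (simp add: minor3_def det3_def others_def Mg_def kk_def Let_def algebra_simps power2_eq_square power3_eq_cube)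

lemma minor_2_3: "minor3 (Mg a k0 k1 k2) 2 3 = - (a 0) * (a 1) * (a 3) * k2"
  by (simp add: minor3_def det3_def others_def Mg_def kk_def Let_def algebra_simps power2_eq_square power3_eq_cube)

lemma minor_3_0: "minor3 (Mg a k0 k1 k2) 3 0 = - (a 1) * (a 2) * (a 3) * k0"
  by (simp add: minor3_def det3_def others_def Mg_def kk_def Let_def algebra_simps power2_eq_square power3_eq_cube)

lemma minor_3_1: "minor3 (Mg a k0 k1 k2) 3 1 = (a 0) * (a 2) * (a 3) * k1"
  by (simp add: minor3_def det3_def others_def Mg_def kk_def Let_def algebra_simps power2_eq_square power3_eq_cube)

lemma minor_3_2: "minor3 (Mg a k0 k1 k2) 3 2 = - (a 0) * (a 1) * (a 3) * k2"
  by (simp add: minor3_def det3_def others_def Mg_def kk_def Let_def algebra_simps power2_eq_square power3_eq_cube)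

lemma minor_3_3: "minor3 (Mg a k0 k1 k2) 3 3 = (a 0) * (a 1) * (a 2)"
  by (simp add: minor3_def det3_def others_def Mg_def kk_def Let_def algebra_simps power2_eq_square power3_eq_cube)


lemma minor3_scale: "minor3 (\<lambda>i j. s * A i j) r c = s^3 * minor3 A r c"
  by (simp add: minor3_def det3_def Let_def algebra_simps power3_eq_cube)

lemma ev_minor3: "ev x (minor3 A r c) = minor3 (\<lambda>i j. ev x (A i j)) r c"
  by (simp add: minor3_def det3_def Let_def ev_add ev_diff ev_mult)

lemma ev_Mg: "ev x (Mg mvar (mconst k0) (mconst k1) (mconst k2) i j) = Mg x (cst k0) (cst k1) (cst k2) i j"
  by (simp add: Mg_def kk_def ev_add ev_diff ev_mult ev_uminus)

context setting begin

abbreviation "Mp \<equiv> Mg mvar (mconst l0) (mconst l1) (mconst l2)"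

lemma hm: "minor3 (hmat fp) r c = mconst 27 * minor3 Mp r c"
proof -
  have "hmat fp = (\<lambda>i j. mconst 3 * Mp i j)" by (intro ext) (rule hmat_eq)
  then have "minor3 (hmat fp) r c = minor3 (\<lambda>i j. mconst 3 * Mp i j) r c"
    by (simp only:)
  also have "\<dots> = mconst 3 ^ 3 * minor3 Mp r c" by (rule minor3_scale)
  finally show ?thesis by (simp add: mconst_power[symmetric])
qed

lemma mm: assumes "hess_minors fp \<subseteq> G" shows "minor3 Mp r c \<in> ideal_gen G"
proof -
  have "mconst 27 * minor3 Mp r c \<in> ideal_gen G"
    using assms unfolding hess_minors_def hm[symmetric] by (blast intro: ideal_gen_base)
  then have "mconst (1/27) * (mconst 27 * minor3 Mp r c) \<in> ideal_gen G" by (rule ideal_gen_mult)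
  then show ?thesis by (simp only: mult.assoc[symmetric] mconst_mult[symmetric]) simp
qed

abbreviation "LL \<equiv> mconst l0 * mvar 0 + mconst l1 * mvar 1 + mconst l2 * mvar 2"

lemma inv_mconst: "c \<noteq> 0 \<Longrightarrow> mconst (inverse c) * mconst c = 1"
  by (simp add: mconst_mult[symmetric])

lemma gens: assumes "hess_minors fp \<subseteq> G"
  shows "mvar 0 * mvar 1 * mvar 2 \<in> ideal_gen G"
    "mvar 1 * mvar 2 * mvar 3 \<in> ideal_gen G"
    "mvar 0 * mvar 2 * mvar 3 \<in> ideal_gen G"
    "mvar 0 * mvar 1 * mvar 3 \<in> ideal_gen G"
    "mvar 2 * mvar 3 ^ 2 \<in> ideal_gen G"
    "mvar 1 * mvar 3 ^ 2 \<in> ideal_gen G"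
    "mvar 0 * mvar 3 ^ 2 \<in> ideal_gen G"
    "mvar 1 * mvar 2 * LL \<in> ideal_gen G"
    "mvar 0 * mvar 2 * LL \<in> ideal_gen G"
    "mvar 0 * mvar 1 * LL \<in> ideal_gen G"
proof -
  note m = mm[OF assms]
  have i0: "mconst (inverse l0) * mconst l0 = 1" using nz(1) by (rule inv_mconst)
  have i1: "mconst (inverse l1) * mconst l1 = 1" using nz(2) by (rule inv_mconst)
  have i2: "mconst (inverse l2) * mconst l2 = 1" using nz(3) by (rule inv_mconst)
  show g1: "mvar 0 * mvar 1 * mvar 2 \<in> ideal_gen G" using m[of 3 3] by (simp add: minor_3_3)
  have "mconst (- inverse l0) * minor3 Mp 0 3 \<in> ideal_gen G" by (rule ideal_gen_mult[OF m])
  moreover have "mconst (- inverse l0) * minor3 Mp 0 3 = mvar 1 * mvar 2 * mvar 3"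
    unfolding minor_0_3 mconst_uminus using i0 by algebra
  ultimately show g2: "mvar 1 * mvar 2 * mvar 3 \<in> ideal_gen G" by simp
  have "mconst (inverse l1) * minor3 Mp 1 3 \<in> ideal_gen G" by (rule ideal_gen_mult[OF m])
  moreover have "mconst (inverse l1) * minor3 Mp 1 3 = mvar 0 * mvar 2 * mvar 3"
    unfolding minor_1_3 using i1 by algebra
  ultimately show g3: "mvar 0 * mvar 2 * mvar 3 \<in> ideal_gen G" by simp
  have "mconst (- inverse l2) * minor3 Mp 2 3 \<in> ideal_gen G" by (rule ideal_gen_mult[OF m])
  moreover have "mconst (- inverse l2) * minor3 Mp 2 3 = mvar 0 * mvar 1 * mvar 3"
    unfolding minor_2_3 mconst_uminus using i2 by algebra
  ultimately show g4: "mvar 0 * mvar 1 * mvar 3 \<in> ideal_gen G" by simp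
  have "mconst (- inverse l0 * inverse l1) * minor3 Mp 0 1 \<in> ideal_gen G" by (rule ideal_gen_mult[OF m])
  moreover have "mconst (- inverse l0 * inverse l1) * minor3 Mp 0 1 = mvar 2 * mvar 3 ^ 2"
    unfolding minor_0_1 mconst_uminus mconst_mult using i0 i1 by algebra
  ultimately show g5: "mvar 2 * mvar 3 ^ 2 \<in> ideal_gen G" by simp
  have "mconst (inverse l0 * inverse l2) * minor3 Mp 0 2 \<in> ideal_gen G" by (rule ideal_gen_mult[OF m])
  moreover have "mconst (inverse l0 * inverse l2) * minor3 Mp 0 2 = mvar 1 * mvar 3 ^ 2"
    unfolding minor_0_2 mconst_mult using i0 i2 by algebra
  ultimately show g6: "mvar 1 * mvar 3 ^ 2 \<in> ideal_gen G" by simp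
  have "mconst (- inverse l1 * inverse l2) * minor3 Mp 1 2 \<in> ideal_gen G" by (rule ideal_gen_mult[OF m])
  moreover have "mconst (- inverse l1 * inverse l2) * minor3 Mp 1 2 = mvar 0 * mvar 3 ^ 2"
    unfolding minor_1_2 mconst_uminus mconst_mult using i1 i2 by algebra
  ultimately show g7: "mvar 0 * mvar 3 ^ 2 \<in> ideal_gen G" by simp
  have "- minor3 Mp 0 0 - mconst l1 ^ 2 * (mvar 2 * mvar 3 ^ 2) - mconst l2 ^ 2 * (mvar 1 * mvar 3 ^ 2) + mvar 1 * mvar 2 * mvar 3 \<in> ideal_gen G"
    by (intro ideal_gen_add ideal_gen_diff ideal_gen_uminus ideal_gen_mult m g2 g5 g6)
  moreover have "- minor3 Mp 0 0 - mconst l1 ^ 2 * (mvar 2 * mvar 3 ^ 2) - mconst l2 ^ 2 * (mvar 1 * mvar 3 ^ 2) + mvar 1 * mvar 2 * mvar 3 = mvar 1 * mvar 2 * LL"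
    unfolding minor_0_0 by algebra
  ultimately show "mvar 1 * mvar 2 * LL \<in> ideal_gen G" by simp
  have "- minor3 Mp 1 1 - mconst l0 ^ 2 * (mvar 2 * mvar 3 ^ 2) - mconst l2 ^ 2 * (mvar 0 * mvar 3 ^ 2) + mvar 0 * mvar 2 * mvar 3 \<in> ideal_gen G"
    by (intro ideal_gen_add ideal_gen_diff ideal_gen_uminus ideal_gen_mult m g3 g5 g7)
  moreover have "- minor3 Mp 1 1 - mconst l0 ^ 2 * (mvar 2 * mvar 3 ^ 2) - mconst l2 ^ 2 * (mvar 0 * mvar 3 ^ 2) + mvar 0 * mvar 2 * mvar 3 = mvar 0 * mvar 2 * LL"
    unfolding minor_1_1 by algebra
  ultimately show "mvar 0 * mvar 2 * LL \<in> ideal_gen G" by simp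
  have "- minor3 Mp 2 2 - mconst l0 ^ 2 * (mvar 1 * mvar 3 ^ 2) - mconst l1 ^ 2 * (mvar 0 * mvar 3 ^ 2) + mvar 0 * mvar 1 * mvar 3 \<in> ideal_gen G"
    by (intro ideal_gen_add ideal_gen_diff ideal_gen_uminus ideal_gen_mult m g4 g6 g7)
  moreover have "- minor3 Mp 2 2 - mconst l0 ^ 2 * (mvar 1 * mvar 3 ^ 2) - mconst l1 ^ 2 * (mvar 0 * mvar 3 ^ 2) + mvar 0 * mvar 1 * mvar 3 = mvar 0 * mvar 1 * LL"
    unfolding minor_2_2 by algebra
  ultimately show "mvar 0 * mvar 1 * LL \<in> ideal_gen G" by simp
qed

end


lemma memb1: "g1 \<in> ideal_gen G \<Longrightarrow> t = ha * g1 \<Longrightarrow> t \<in> ideal_gen G"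
  by (simp add: ideal_gen_mult)
lemma memb2: "g1 \<in> ideal_gen G \<Longrightarrow> g2 \<in> ideal_gen G \<Longrightarrow> t = ha * g1 + hb * g2 \<Longrightarrow> t \<in> ideal_gen G"
  by (simp add: ideal_gen_mult ideal_gen_add)
lemma memb3: "g1 \<in> ideal_gen G \<Longrightarrow> g2 \<in> ideal_gen G \<Longrightarrow> g3 \<in> ideal_gen G \<Longrightarrow>
   t = ha * g1 + hb * g2 + hc * g3 \<Longrightarrow> t \<in> ideal_gen G"
  by (simp add: ideal_gen_mult ideal_gen_add)
lemma memb4: "g1 \<in> ideal_gen G \<Longrightarrow> g2 \<in> ideal_gen G \<Longrightarrow> g3 \<in> ideal_gen G \<Longrightarrow> g4 \<in> ideal_gen G \<Longrightarrow>
   t = ha * g1 + hb * g2 + hc * g3 + hdd * g4 \<Longrightarrow> t \<in> ideal_gen G"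
  by (simp add: ideal_gen_mult ideal_gen_add)

context setting begin

lemma van_chart:
  assumes "x i = 1" "\<And>j. re (x j) = q j" "N \<ge> 2"
    and "\<And>r c. minor3 (Mg x (cst l0) (cst l1) (cst l2)) r c = 0"
    and "g \<in> insert (mvar i - 1) (hess_minors fp) \<union> mpow q N"
  shows "ev x g = 0"
proof -
  consider "g = mvar i - 1" | "g \<in> hess_minors fp" | "g \<in> mpow q N" using assms(5) by blast
  then show ?thesis
  proof cases
    case 1 then show ?thesis using assms(1) by (simp add: ev_diff)
  next
    case 2
    then obtain r c where g: "g = minor3 (hmat fp) r c" unfolding hess_minors_def by blast
    have "ev x g = cst 27 * minor3 (\<lambda>i j. ev x (Mp i j)) r c"
      unfolding g hm ev_mult ev_minor3 ev_mconst ..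
    also have "\<dots> = 0" unfolding ev_Mg assms(4) by simp
    finally show ?thesis .
  next
    case 3 then show ?thesis using ev_mpow assms(2,3) by blast
  qed
qed

lemma dbl_chart:
  assumes qi: "q i = 1" and q3: "q 3 = 0" and N: "N \<ge> 2"
    and vars: "\<And>j. j \<noteq> 3 \<Longrightarrow> mvar j - mconst (q j) \<in> ideal_gen (insert (mvar i - 1) (hess_minors fp) \<union> mpow q N)"
    and sq: "mvar 3 ^ 2 \<in> ideal_gen (insert (mvar i - 1) (hess_minors fp) \<union> mpow q N)"
    and mins: "\<And>r c. minor3 (Mg (\<lambda>i. if i = 3 then D (q 3) 1 else cst (q i)) (cst l0) (cst l1) (cst l2)) r c = 0"
    and i3: "i \<noteq> 3"
  shows "quot_dim (ideal_gen (insert (mvar i - 1) (hess_minors fp) \<union> mpow q N)) 2"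
proof (rule quot_dim_2[where k = 3])
  show "(mvar 3 - mconst (q 3))^2 \<in> ideal_gen (insert (mvar i - 1) (hess_minors fp) \<union> mpow q N)" using sq q3 by simp
next
  fix g assume "g \<in> insert (mvar i - 1) (hess_minors fp) \<union> mpow q N"
  then show "ev (\<lambda>i. if i = 3 then D (q 3) 1 else cst (q i)) g = 0"
  proof (rule van_chart[rotated 4])
    show "(if i = 3 then D (q 3) 1 else cst (q i)) = 1" using qi i3 by (simp add: dual_eq_iff)
    show "re (if j = 3 then D (q 3) 1 else cst (q j)) = q j" for j by simp
  qed (use N mins in auto)
qed (rule vars)

lemma simple_chart:
  assumes qi: "q i = 1" and N: "N \<ge> 2"
    and vars: "\<And>j. mvar j - mconst (q j) \<in> ideal_gen (insert (mvar i - 1) (hess_minors fp) \<union> mpow q N)"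
    and mins: "\<And>r c. minor3 (Mg (\<lambda>i. cst (q i)) (cst l0) (cst l1) (cst l2)) r c = 0"
  shows "quot_dim (ideal_gen (insert (mvar i - 1) (hess_minors fp) \<union> mpow q N)) 1"
proof (rule quot_dim_1)
  fix g assume "g \<in> insert (mvar i - 1) (hess_minors fp) \<union> mpow q N"
  then show "ev (\<lambda>i. cst (q i)) g = 0"
  proof (rule van_chart[rotated 4])
    show "cst (q i) = 1" using qi by (simp add: dual_eq_iff)
  qed (use N mins in auto)
qed (rule vars)

lemmas minor_simps = minor_0_0 minor_0_1 minor_0_2 minor_0_3 minor_1_0 minor_1_1 minor_1_2 minor_1_3
            minor_2_0 minor_2_1 minor_2_2 minor_2_3 minor_3_0 minor_3_1 minor_3_2 minor_3_3

lemma chart_dbl_0: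
  assumes q: "q 0 = 1" "q 1 = 0" "q 2 = 0" "q 3 = 0" and N: "N \<ge> 2"
  shows "quot_dim (ideal_gen (insert (mvar 0 - 1) (hess_minors fp) \<union> mpow q N)) 2"
proof -
  let ?G = "insert (mvar 0 - 1) (hess_minors fp) \<union> mpow q N"
  let ?K = "ideal_gen ?G"
  have sub: "hess_minors fp \<subseteq> ?G" by blast
  note g = gens[OF sub]
  have e: "mvar 0 - 1 \<in> ?K" by (rule ideal_gen_base) blast
  have pw: "(mvar i - mconst (q i)) ^ N \<in> ?K" for i by (rule ideal_gen_base) (use mpow_mem in blast)
  have pwA: "mvar 1 ^ N \<in> ?K" using pw[of 1] q by simp
  have pwB: "mvar 2 ^ N \<in> ?K" using pw[of 2] q by simp
  have a33: "mvar 3 ^ 2 \<in> ?K"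
    by (rule memb2[OF g(7) e, where ha = 1 and hb = "- (mvar 3 ^ 2)"]) algebra
  have aAB: "mvar 1 * mvar 2 \<in> ?K"
    by (rule memb2[OF g(1) e, where ha = 1 and hb = "- mvar 1 * mvar 2"]) algebra
  have "mvar 1 * (mconst l0 + mconst l1 * mvar 1) \<in> ?K"
    by (rule memb3[OF g(10) e aAB, where ha = 1 and hb = "- mvar 1 * LL - mconst l0 * mvar 1" and hc = "- mconst l2"]) algebra
  then have aA: "mvar 1 \<in> ?K"
  proof (rule ideal_unit)
    show "(mconst l1 * mvar 1) ^ N \<in> ?K" by (rule memb1[OF pwA, where ha = "mconst l1 ^ N"]) (simp add: power_mult_distrib)
  qed (rule nz)
  have "mvar 2 * (mconst l0 + mconst l2 * mvar 2) \<in> ?K"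
    by (rule memb3[OF g(9) e aAB, where ha = 1 and hb = "- mvar 2 * LL - mconst l0 * mvar 2" and hc = "- mconst l1"]) algebra
  then have aB: "mvar 2 \<in> ?K"
  proof (rule ideal_unit)
    show "(mconst l2 * mvar 2) ^ N \<in> ?K" by (rule memb1[OF pwB, where ha = "mconst l2 ^ N"]) (simp add: power_mult_distrib)
  qed (rule nz)
  show ?thesis
  proof (rule dbl_chart[where i = 0])
    fix j :: 4 assume "j \<noteq> 3"
    then show "mvar j - mconst (q j) \<in> ?K" using in4[of j] q e aA aB by auto
  next
    show "minor3 (Mg (\<lambda>i. if i = 3 then D (q 3) 1 else cst (q i)) (cst l0) (cst l1) (cst l2)) r c = 0" for r c
      using in4[of r] in4[of c] q
      by (elim disjE) (simp_all add: minor_simps dual_eq_iff power2_eq_square)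
  qed (use q N a33 in auto)
qed

lemma chart_dbl_1:
  assumes q: "q 0 = 0" "q 1 = 1" "q 2 = 0" "q 3 = 0" and N: "N \<ge> 2"
  shows "quot_dim (ideal_gen (insert (mvar 1 - 1) (hess_minors fp) \<union> mpow q N)) 2"
proof -
  let ?G = "insert (mvar 1 - 1) (hess_minors fp) \<union> mpow q N"
  let ?K = "ideal_gen ?G"
  have sub: "hess_minors fp \<subseteq> ?G" by blast
  note g = gens[OF sub]
  have e: "mvar 1 - 1 \<in> ?K" by (rule ideal_gen_base) blast
  have pw: "(mvar i - mconst (q i)) ^ N \<in> ?K" for i by (rule ideal_gen_base) (use mpow_mem in blast)
  have pwA: "mvar 0 ^ N \<in> ?K" using pw[of 0] q by simp
  have pwB: "mvar 2 ^ N \<in> ?K" using pw[of 2] q by simp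
  have a33: "mvar 3 ^ 2 \<in> ?K"
    by (rule memb2[OF g(6) e, where ha = 1 and hb = "- (mvar 3 ^ 2)"]) algebra
  have aAB: "mvar 0 * mvar 2 \<in> ?K"
    by (rule memb2[OF g(1) e, where ha = 1 and hb = "- mvar 0 * mvar 2"]) algebra
  have "mvar 0 * (mconst l1 + mconst l0 * mvar 0) \<in> ?K"
    by (rule memb3[OF g(10) e aAB, where ha = 1 and hb = "- mvar 0 * LL - mconst l1 * mvar 0" and hc = "- mconst l2"]) algebra
  then have aA: "mvar 0 \<in> ?K"
  proof (rule ideal_unit)
    show "(mconst l0 * mvar 0) ^ N \<in> ?K" by (rule memb1[OF pwA, where ha = "mconst l0 ^ N"]) (simp add: power_mult_distrib)
  qed (rule nz)
  have "mvar 2 * (mconst l1 + mconst l2 * mvar 2) \<in> ?K"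
    by (rule memb3[OF g(8) e aAB, where ha = 1 and hb = "- mvar 2 * LL - mconst l1 * mvar 2" and hc = "- mconst l0"]) algebra
  then have aB: "mvar 2 \<in> ?K"
  proof (rule ideal_unit)
    show "(mconst l2 * mvar 2) ^ N \<in> ?K" by (rule memb1[OF pwB, where ha = "mconst l2 ^ N"]) (simp add: power_mult_distrib)
  qed (rule nz)
  show ?thesis
  proof (rule dbl_chart[where i = 1])
    fix j :: 4 assume "j \<noteq> 3"
    then show "mvar j - mconst (q j) \<in> ?K" using in4[of j] q e aA aB by auto
  next
    show "minor3 (Mg (\<lambda>i. if i = 3 then D (q 3) 1 else cst (q i)) (cst l0) (cst l1) (cst l2)) r c = 0" for r c
      using in4[of r] in4[of c] q
      by (elim disjE) (simp_all add: minor_simps dual_eq_iff power2_eq_square)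
  qed (use q N a33 in auto)
qed

lemma chart_dbl_2:
  assumes q: "q 0 = 0" "q 1 = 0" "q 2 = 1" "q 3 = 0" and N: "N \<ge> 2"
  shows "quot_dim (ideal_gen (insert (mvar 2 - 1) (hess_minors fp) \<union> mpow q N)) 2"
proof -
  let ?G = "insert (mvar 2 - 1) (hess_minors fp) \<union> mpow q N"
  let ?K = "ideal_gen ?G"
  have sub: "hess_minors fp \<subseteq> ?G" by blast
  note g = gens[OF sub]
  have e: "mvar 2 - 1 \<in> ?K" by (rule ideal_gen_base) blast
  have pw: "(mvar i - mconst (q i)) ^ N \<in> ?K" for i by (rule ideal_gen_base) (use mpow_mem in blast)
  have pwA: "mvar 0 ^ N \<in> ?K" using pw[of 0] q by simp
  have pwB: "mvar 1 ^ N \<in> ?K" using pw[of 1] q by simp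
  have a33: "mvar 3 ^ 2 \<in> ?K"
    by (rule memb2[OF g(5) e, where ha = 1 and hb = "- (mvar 3 ^ 2)"]) algebra
  have aAB: "mvar 0 * mvar 1 \<in> ?K"
    by (rule memb2[OF g(1) e, where ha = 1 and hb = "- mvar 0 * mvar 1"]) algebra
  have "mvar 0 * (mconst l2 + mconst l0 * mvar 0) \<in> ?K"
    by (rule memb3[OF g(9) e aAB, where ha = 1 and hb = "- mvar 0 * LL - mconst l2 * mvar 0" and hc = "- mconst l1"]) algebra
  then have aA: "mvar 0 \<in> ?K"
  proof (rule ideal_unit)
    show "(mconst l0 * mvar 0) ^ N \<in> ?K" by (rule memb1[OF pwA, where ha = "mconst l0 ^ N"]) (simp add: power_mult_distrib)
  qed (rule nz)
  have "mvar 1 * (mconst l2 + mconst l1 * mvar 1) \<in> ?K"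
    by (rule memb3[OF g(8) e aAB, where ha = 1 and hb = "- mvar 1 * LL - mconst l2 * mvar 1" and hc = "- mconst l0"]) algebra
  then have aB: "mvar 1 \<in> ?K"
  proof (rule ideal_unit)
    show "(mconst l1 * mvar 1) ^ N \<in> ?K" by (rule memb1[OF pwB, where ha = "mconst l1 ^ N"]) (simp add: power_mult_distrib)
  qed (rule nz)
  show ?thesis
  proof (rule dbl_chart[where i = 2])
    fix j :: 4 assume "j \<noteq> 3"
    then show "mvar j - mconst (q j) \<in> ?K" using in4[of j] q e aA aB by auto
  next
    show "minor3 (Mg (\<lambda>i. if i = 3 then D (q 3) 1 else cst (q i)) (cst l0) (cst l1) (cst l2)) r c = 0" for r c
      using in4[of r] in4[of c] q
      by (elim disjE) (simp_all add: minor_simps dual_eq_iff power2_eq_square)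
  qed (use q N a33 in auto)
qed

lemma chart_s_0_1:
  assumes q: "q 0 = 1" "q 1 = - l0 / l1" "q 2 = 0" "q 3 = 0" and N: "N \<ge> 2"
  shows "quot_dim (ideal_gen (insert (mvar 0 - 1) (hess_minors fp) \<union> mpow q N)) 1"
proof -
  let ?G = "insert (mvar 0 - 1) (hess_minors fp) \<union> mpow q N"
  let ?K = "ideal_gen ?G"
  let ?t = "mvar 1 - mconst (- l0 / l1)"
  have sub: "hess_minors fp \<subseteq> ?G" by blast
  note g = gens[OF sub]
  have e: "mvar 0 - 1 \<in> ?K" by (rule ideal_gen_base) blast
  have pw: "(mvar i - mconst (q i)) ^ N \<in> ?K" for i by (rule ideal_gen_base) (use mpow_mem in blast)
  have pwt: "?t ^ N \<in> ?K" using pw[of 1] q by simp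
  have qnz: "- l0 / l1 \<noteq> 0" using nz by simp
  have iP: "mconst (inverse l1) * mconst l1 = 1" using nz(2) by (rule inv_mconst)
  have rP: "mconst l1 * mconst (- l0 / l1) = - mconst l0"
    using nz(2) by (simp add: mconst_mult[symmetric] mconst_uminus[symmetric])
  have aP3: "mvar 1 * mvar 3 \<in> ?K"
    by (rule memb2[OF g(4) e, where ha = 1 and hb = "- mvar 1 * mvar 3"]) algebra
  have "mvar 3 * (mconst (- l0 / l1) + ?t) \<in> ?K" using aP3 by (simp add: mult.commute)
  then have a3: "mvar 3 \<in> ?K" using pwt qnz by (rule ideal_unit)
  have aPZ: "mvar 1 * mvar 2 \<in> ?K"
    by (rule memb2[OF g(1) e, where ha = 1 and hb = "- mvar 1 * mvar 2"]) algebra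
  have "mvar 2 * (mconst (- l0 / l1) + ?t) \<in> ?K" using aPZ by (simp add: mult.commute)
  then have aZ: "mvar 2 \<in> ?K" using pwt qnz by (rule ideal_unit)
  have "?t * (mconst (- l0 / l1) + ?t) \<in> ?K"
    by (rule memb3[OF g(10) e aPZ, where ha = "mconst (inverse l1)" and hb = "mconst (inverse l1) * (- mvar 1 * LL - mconst l0 * mvar 1)" and hc = "- mconst (inverse l1) * mconst l2"])
      (use iP rP in algebra)
  then have at: "?t \<in> ?K" using pwt qnz by (rule ideal_unit)
  show ?thesis
  proof (rule simple_chart[where i = 0])
    fix j :: 4
    show "mvar j - mconst (q j) \<in> ?K" using in4[of j] q e a3 aZ at by auto
  next
    show "minor3 (Mg (\<lambda>i. cst (q i)) (cst l0) (cst l1) (cst l2)) r c = 0" for r c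
      using in4[of r] in4[of c]
      by (elim disjE) (simp_all add: minor_simps dual_eq_iff power2_eq_square q field_simps nz)
  qed (use q N in auto)
qed

lemma chart_s_1_0:
  assumes q: "q 0 = - l1 / l0" "q 1 = 1" "q 2 = 0" "q 3 = 0" and N: "N \<ge> 2"
  shows "quot_dim (ideal_gen (insert (mvar 1 - 1) (hess_minors fp) \<union> mpow q N)) 1"
proof -
  let ?G = "insert (mvar 1 - 1) (hess_minors fp) \<union> mpow q N"
  let ?K = "ideal_gen ?G"
  let ?t = "mvar 0 - mconst (- l1 / l0)"
  have sub: "hess_minors fp \<subseteq> ?G" by blast
  note g = gens[OF sub]
  have e: "mvar 1 - 1 \<in> ?K" by (rule ideal_gen_base) blast
  have pw: "(mvar i - mconst (q i)) ^ N \<in> ?K" for i by (rule ideal_gen_base) (use mpow_mem in blast)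
  have pwt: "?t ^ N \<in> ?K" using pw[of 0] q by simp
  have qnz: "- l1 / l0 \<noteq> 0" using nz by simp
  have iP: "mconst (inverse l0) * mconst l0 = 1" using nz(1) by (rule inv_mconst)
  have rP: "mconst l0 * mconst (- l1 / l0) = - mconst l1"
    using nz(1) by (simp add: mconst_mult[symmetric] mconst_uminus[symmetric])
  have aP3: "mvar 0 * mvar 3 \<in> ?K"
    by (rule memb2[OF g(4) e, where ha = 1 and hb = "- mvar 0 * mvar 3"]) algebra
  have "mvar 3 * (mconst (- l1 / l0) + ?t) \<in> ?K" using aP3 by (simp add: mult.commute)
  then have a3: "mvar 3 \<in> ?K" using pwt qnz by (rule ideal_unit)
  have aPZ: "mvar 0 * mvar 2 \<in> ?K"
    by (rule memb2[OF g(1) e, where ha = 1 and hb = "- mvar 0 * mvar 2"]) algebra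
  have "mvar 2 * (mconst (- l1 / l0) + ?t) \<in> ?K" using aPZ by (simp add: mult.commute)
  then have aZ: "mvar 2 \<in> ?K" using pwt qnz by (rule ideal_unit)
  have "?t * (mconst (- l1 / l0) + ?t) \<in> ?K"
    by (rule memb3[OF g(10) e aPZ, where ha = "mconst (inverse l0)" and hb = "mconst (inverse l0) * (- mvar 0 * LL - mconst l1 * mvar 0)" and hc = "- mconst (inverse l0) * mconst l2"])
      (use iP rP in algebra)
  then have at: "?t \<in> ?K" using pwt qnz by (rule ideal_unit)
  show ?thesis
  proof (rule simple_chart[where i = 1])
    fix j :: 4
    show "mvar j - mconst (q j) \<in> ?K" using in4[of j] q e a3 aZ at by auto
  next
    show "minor3 (Mg (\<lambda>i. cst (q i)) (cst l0) (cst l1) (cst l2)) r c = 0" for r c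
      using in4[of r] in4[of c]
      by (elim disjE) (simp_all add: minor_simps dual_eq_iff power2_eq_square q field_simps nz)
  qed (use q N in auto)
qed

lemma chart_s_0_2:
  assumes q: "q 0 = 1" "q 1 = 0" "q 2 = - l0 / l2" "q 3 = 0" and N: "N \<ge> 2"
  shows "quot_dim (ideal_gen (insert (mvar 0 - 1) (hess_minors fp) \<union> mpow q N)) 1"
proof -
  let ?G = "insert (mvar 0 - 1) (hess_minors fp) \<union> mpow q N"
  let ?K = "ideal_gen ?G"
  let ?t = "mvar 2 - mconst (- l0 / l2)"
  have sub: "hess_minors fp \<subseteq> ?G" by blast
  note g = gens[OF sub]
  have e: "mvar 0 - 1 \<in> ?K" by (rule ideal_gen_base) blast
  have pw: "(mvar i - mconst (q i)) ^ N \<in> ?K" for i by (rule ideal_gen_base) (use mpow_mem in blast)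
  have pwt: "?t ^ N \<in> ?K" using pw[of 2] q by simp
  have qnz: "- l0 / l2 \<noteq> 0" using nz by simp
  have iP: "mconst (inverse l2) * mconst l2 = 1" using nz(3) by (rule inv_mconst)
  have rP: "mconst l2 * mconst (- l0 / l2) = - mconst l0"
    using nz(3) by (simp add: mconst_mult[symmetric] mconst_uminus[symmetric])
  have aP3: "mvar 2 * mvar 3 \<in> ?K"
    by (rule memb2[OF g(3) e, where ha = 1 and hb = "- mvar 2 * mvar 3"]) algebra
  have "mvar 3 * (mconst (- l0 / l2) + ?t) \<in> ?K" using aP3 by (simp add: mult.commute)
  then have a3: "mvar 3 \<in> ?K" using pwt qnz by (rule ideal_unit)
  have aPZ: "mvar 2 * mvar 1 \<in> ?K"
    by (rule memb2[OF g(1) e, where ha = 1 and hb = "- mvar 2 * mvar 1"]) algebra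
  have "mvar 1 * (mconst (- l0 / l2) + ?t) \<in> ?K" using aPZ by (simp add: mult.commute)
  then have aZ: "mvar 1 \<in> ?K" using pwt qnz by (rule ideal_unit)
  have "?t * (mconst (- l0 / l2) + ?t) \<in> ?K"
    by (rule memb3[OF g(9) e aPZ, where ha = "mconst (inverse l2)" and hb = "mconst (inverse l2) * (- mvar 2 * LL - mconst l0 * mvar 2)" and hc = "- mconst (inverse l2) * mconst l1"])
      (use iP rP in algebra)
  then have at: "?t \<in> ?K" using pwt qnz by (rule ideal_unit)
  show ?thesis
  proof (rule simple_chart[where i = 0])
    fix j :: 4
    show "mvar j - mconst (q j) \<in> ?K" using in4[of j] q e a3 aZ at by auto
  next
    show "minor3 (Mg (\<lambda>i. cst (q i)) (cst l0) (cst l1) (cst l2)) r c = 0" for r c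
      using in4[of r] in4[of c]
      by (elim disjE) (simp_all add: minor_simps dual_eq_iff power2_eq_square q field_simps nz)
  qed (use q N in auto)
qed

lemma chart_s_2_0:
  assumes q: "q 0 = - l2 / l0" "q 1 = 0" "q 2 = 1" "q 3 = 0" and N: "N \<ge> 2"
  shows "quot_dim (ideal_gen (insert (mvar 2 - 1) (hess_minors fp) \<union> mpow q N)) 1"
proof -
  let ?G = "insert (mvar 2 - 1) (hess_minors fp) \<union> mpow q N"
  let ?K = "ideal_gen ?G"
  let ?t = "mvar 0 - mconst (- l2 / l0)"
  have sub: "hess_minors fp \<subseteq> ?G" by blast
  note g = gens[OF sub]
  have e: "mvar 2 - 1 \<in> ?K" by (rule ideal_gen_base) blast
  have pw: "(mvar i - mconst (q i)) ^ N \<in> ?K" for i by (rule ideal_gen_base) (use mpow_mem in blast)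
  have pwt: "?t ^ N \<in> ?K" using pw[of 0] q by simp
  have qnz: "- l2 / l0 \<noteq> 0" using nz by simp
  have iP: "mconst (inverse l0) * mconst l0 = 1" using nz(1) by (rule inv_mconst)
  have rP: "mconst l0 * mconst (- l2 / l0) = - mconst l2"
    using nz(1) by (simp add: mconst_mult[symmetric] mconst_uminus[symmetric])
  have aP3: "mvar 0 * mvar 3 \<in> ?K"
    by (rule memb2[OF g(3) e, where ha = 1 and hb = "- mvar 0 * mvar 3"]) algebra
  have "mvar 3 * (mconst (- l2 / l0) + ?t) \<in> ?K" using aP3 by (simp add: mult.commute)
  then have a3: "mvar 3 \<in> ?K" using pwt qnz by (rule ideal_unit)
  have aPZ: "mvar 0 * mvar 1 \<in> ?K"
    by (rule memb2[OF g(1) e, where ha = 1 and hb = "- mvar 0 * mvar 1"]) algebra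
  have "mvar 1 * (mconst (- l2 / l0) + ?t) \<in> ?K" using aPZ by (simp add: mult.commute)
  then have aZ: "mvar 1 \<in> ?K" using pwt qnz by (rule ideal_unit)
  have "?t * (mconst (- l2 / l0) + ?t) \<in> ?K"
    by (rule memb3[OF g(9) e aPZ, where ha = "mconst (inverse l0)" and hb = "mconst (inverse l0) * (- mvar 0 * LL - mconst l2 * mvar 0)" and hc = "- mconst (inverse l0) * mconst l1"])
      (use iP rP in algebra)
  then have at: "?t \<in> ?K" using pwt qnz by (rule ideal_unit)
  show ?thesis
  proof (rule simple_chart[where i = 2])
    fix j :: 4
    show "mvar j - mconst (q j) \<in> ?K" using in4[of j] q e a3 aZ at by auto
  next
    show "minor3 (Mg (\<lambda>i. cst (q i)) (cst l0) (cst l1) (cst l2)) r c = 0" for r c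
      using in4[of r] in4[of c]
      by (elim disjE) (simp_all add: minor_simps dual_eq_iff power2_eq_square q field_simps nz)
  qed (use q N in auto)
qed

lemma chart_s_1_2:
  assumes q: "q 0 = 0" "q 1 = 1" "q 2 = - l1 / l2" "q 3 = 0" and N: "N \<ge> 2"
  shows "quot_dim (ideal_gen (insert (mvar 1 - 1) (hess_minors fp) \<union> mpow q N)) 1"
proof -
  let ?G = "insert (mvar 1 - 1) (hess_minors fp) \<union> mpow q N"
  let ?K = "ideal_gen ?G"
  let ?t = "mvar 2 - mconst (- l1 / l2)"
  have sub: "hess_minors fp \<subseteq> ?G" by blast
  note g = gens[OF sub]
  have e: "mvar 1 - 1 \<in> ?K" by (rule ideal_gen_base) blast
  have pw: "(mvar i - mconst (q i)) ^ N \<in> ?K" for i by (rule ideal_gen_base) (use mpow_mem in blast)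
  have pwt: "?t ^ N \<in> ?K" using pw[of 2] q by simp
  have qnz: "- l1 / l2 \<noteq> 0" using nz by simp
  have iP: "mconst (inverse l2) * mconst l2 = 1" using nz(3) by (rule inv_mconst)
  have rP: "mconst l2 * mconst (- l1 / l2) = - mconst l1"
    using nz(3) by (simp add: mconst_mult[symmetric] mconst_uminus[symmetric])
  have aP3: "mvar 2 * mvar 3 \<in> ?K"
    by (rule memb2[OF g(2) e, where ha = 1 and hb = "- mvar 2 * mvar 3"]) algebra
  have "mvar 3 * (mconst (- l1 / l2) + ?t) \<in> ?K" using aP3 by (simp add: mult.commute)
  then have a3: "mvar 3 \<in> ?K" using pwt qnz by (rule ideal_unit)
  have aPZ: "mvar 2 * mvar 0 \<in> ?K"
    by (rule memb2[OF g(1) e, where ha = 1 and hb = "- mvar 2 * mvar 0"]) algebra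
  have "mvar 0 * (mconst (- l1 / l2) + ?t) \<in> ?K" using aPZ by (simp add: mult.commute)
  then have aZ: "mvar 0 \<in> ?K" using pwt qnz by (rule ideal_unit)
  have "?t * (mconst (- l1 / l2) + ?t) \<in> ?K"
    by (rule memb3[OF g(8) e aPZ, where ha = "mconst (inverse l2)" and hb = "mconst (inverse l2) * (- mvar 2 * LL - mconst l1 * mvar 2)" and hc = "- mconst (inverse l2) * mconst l0"])
      (use iP rP in algebra)
  then have at: "?t \<in> ?K" using pwt qnz by (rule ideal_unit)
  show ?thesis
  proof (rule simple_chart[where i = 1])
    fix j :: 4
    show "mvar j - mconst (q j) \<in> ?K" using in4[of j] q e a3 aZ at by auto
  next
    show "minor3 (Mg (\<lambda>i. cst (q i)) (cst l0) (cst l1) (cst l2)) r c = 0" for r c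
      using in4[of r] in4[of c]
      by (elim disjE) (simp_all add: minor_simps dual_eq_iff power2_eq_square q field_simps nz)
  qed (use q N in auto)
qed

lemma chart_s_2_1:
  assumes q: "q 0 = 0" "q 1 = - l2 / l1" "q 2 = 1" "q 3 = 0" and N: "N \<ge> 2"
  shows "quot_dim (ideal_gen (insert (mvar 2 - 1) (hess_minors fp) \<union> mpow q N)) 1"
proof -
  let ?G = "insert (mvar 2 - 1) (hess_minors fp) \<union> mpow q N"
  let ?K = "ideal_gen ?G"
  let ?t = "mvar 1 - mconst (- l2 / l1)"
  have sub: "hess_minors fp \<subseteq> ?G" by blast
  note g = gens[OF sub]
  have e: "mvar 2 - 1 \<in> ?K" by (rule ideal_gen_base) blast
  have pw: "(mvar i - mconst (q i)) ^ N \<in> ?K" for i by (rule ideal_gen_base) (use mpow_mem in blast)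
  have pwt: "?t ^ N \<in> ?K" using pw[of 1] q by simp
  have qnz: "- l2 / l1 \<noteq> 0" using nz by simp
  have iP: "mconst (inverse l1) * mconst l1 = 1" using nz(2) by (rule inv_mconst)
  have rP: "mconst l1 * mconst (- l2 / l1) = - mconst l2"
    using nz(2) by (simp add: mconst_mult[symmetric] mconst_uminus[symmetric])
  have aP3: "mvar 1 * mvar 3 \<in> ?K"
    by (rule memb2[OF g(2) e, where ha = 1 and hb = "- mvar 1 * mvar 3"]) algebra
  have "mvar 3 * (mconst (- l2 / l1) + ?t) \<in> ?K" using aP3 by (simp add: mult.commute)
  then have a3: "mvar 3 \<in> ?K" using pwt qnz by (rule ideal_unit)
  have aPZ: "mvar 1 * mvar 0 \<in> ?K"
    by (rule memb2[OF g(1) e, where ha = 1 and hb = "- mvar 1 * mvar 0"]) algebra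
  have "mvar 0 * (mconst (- l2 / l1) + ?t) \<in> ?K" using aPZ by (simp add: mult.commute)
  then have aZ: "mvar 0 \<in> ?K" using pwt qnz by (rule ideal_unit)
  have "?t * (mconst (- l2 / l1) + ?t) \<in> ?K"
    by (rule memb3[OF g(8) e aPZ, where ha = "mconst (inverse l1)" and hb = "mconst (inverse l1) * (- mvar 1 * LL - mconst l2 * mvar 1)" and hc = "- mconst (inverse l1) * mconst l0"])
      (use iP rP in algebra)
  then have at: "?t \<in> ?K" using pwt qnz by (rule ideal_unit)
  show ?thesis
  proof (rule simple_chart[where i = 2])
    fix j :: 4
    show "mvar j - mconst (q j) \<in> ?K" using in4[of j] q e a3 aZ at by auto
  next
    show "minor3 (Mg (\<lambda>i. cst (q i)) (cst l0) (cst l1) (cst l2)) r c = 0" for r c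
      using in4[of r] in4[of c]
      by (elim disjE) (simp_all add: minor_simps dual_eq_iff power2_eq_square q field_simps nz)
  qed (use q N in auto)
qed



lemma chart_s_3:
  assumes q: "q 0 = 0" "q 1 = 0" "q 2 = 0" "q 3 = 1" and N: "N \<ge> 2"
  shows "quot_dim (ideal_gen (insert (mvar 3 - 1) (hess_minors fp) \<union> mpow q N)) 1"
proof -
  let ?G = "insert (mvar 3 - 1) (hess_minors fp) \<union> mpow q N"
  let ?K = "ideal_gen ?G"
  have sub: "hess_minors fp \<subseteq> ?G" by blast
  note g = gens[OF sub]
  have e: "mvar 3 - 1 \<in> ?K" by (rule ideal_gen_base) blast
  have pw: "(mvar i - mconst (q i)) ^ N \<in> ?K" for i by (rule ideal_gen_base) (use mpow_mem in blast)
  have pwt: "(mvar 3 - 1) ^ N \<in> ?K" using pw[of 3] q by simp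
  have one: "(1::complex) \<noteq> 0" by simp
  have red: "mvar i \<in> ?K" if "mvar i * mvar 3 ^ 2 \<in> ?K" for i
  proof -
    have "(mvar i * mvar 3) * (mconst 1 + (mvar 3 - 1)) \<in> ?K" using that by (simp add: power2_eq_square mult.assoc)
    then have "mvar i * mvar 3 \<in> ?K" using pwt one by (rule ideal_unit)
    then have "mvar i * (mconst 1 + (mvar 3 - 1)) \<in> ?K" by simp
    then show ?thesis using pwt one by (rule ideal_unit)
  qed
  have a0: "mvar 0 \<in> ?K" by (rule red) (rule g(7))
  have a1: "mvar 1 \<in> ?K" by (rule red) (rule g(6))
  have a2: "mvar 2 \<in> ?K" by (rule red) (rule g(5))
  show ?thesis
  proof (rule simple_chart[where i = 3])
    fix j :: 4
    show "mvar j - mconst (q j) \<in> ?K" using in4[of j] q e a0 a1 a2 by auto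
  next
    show "minor3 (Mg (\<lambda>i. cst (q i)) (cst l0) (cst l1) (cst l2)) r c = 0" for r c
      using in4[of r] in4[of c]
      by (elim disjE) (simp_all add: minor_simps dual_eq_iff power2_eq_square q)
  qed (use q N in auto)
qed

end


context setting begin

lemma Qpoly_scale: "Qpoly fp (\<lambda>k. c * b k) = mconst c * Qpoly fp b"
  unfolding Qpoly_def sum_distrib_left by (simp add: mconst_mult mult.assoc)

lemma Qpoly_inj: assumes "Qpoly fp a = Qpoly fp b" shows "a = b"
proof -
  have "\<And>i j. qmat (Qpoly fp a) i j = qmat (Qpoly fp b) i j" using assms by simp
  then have "\<And>i j. Mg a l0 l1 l2 i j = Mg b l0 l1 l2 i j" unfolding qmat_Qpoly by simp
  from this[of 0 0] this[of 1 1] this[of 2 2] this[of 0 3]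
  have "a 0 = b 0" "a 1 = b 1" "a 2 = b 2" "a 3 = b 3" using nz by (simp_all add: Mg_def kk_def)
  then show ?thesis
    by (intro ext) (subgoal_tac "x = 0 \<or> x = 1 \<or> x = 2 \<or> x = 3", elim disjE, simp_all add: in4)
qed

lemma Qpoly_zero: "Qpoly fp (\<lambda>_. 0) = 0"
  by (simp add: Qpoly_def)

lemma Qpoly_nz: "a \<noteq> (\<lambda>_. 0) \<Longrightarrow> Qpoly fp a \<noteq> 0"
proof
  assume "a \<noteq> (\<lambda>_. 0)" "Qpoly fp a = 0"
  then have "Qpoly fp a = Qpoly fp (\<lambda>_. 0)" by (simp add: Qpoly_zero)
  then have "a = (\<lambda>_. 0)" by (rule Qpoly_inj)
  then show False using \<open>a \<noteq> (\<lambda>_. 0)\<close> by simp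
qed

lemma rank_Qpoly: "rank_le2 (Qpoly fp a) \<longleftrightarrow> (\<forall>r c. minor3 (Mg a l0 l1 l2) r c = 0)"
proof -
  have "qmat (Qpoly fp a) = (\<lambda>i j. 3 * Mg a l0 l1 l2 i j)" by (intro ext) (rule qmat_Qpoly)
  then show ?thesis unfolding rank_le2_def by (simp add: minor3_scale)
qed

definition "av0 = (\<lambda>k::4. if k = 0 then 1/3 else 0 :: complex)"
definition "av1 = (\<lambda>k::4. if k = 1 then 1/3 else 0 :: complex)"
definition "av2 = (\<lambda>k::4. if k = 2 then 1/3 else 0 :: complex)"
definition "av3 = (\<lambda>k::4. if k = 0 then l1/3 else if k = 1 then - l0/3 else 0 :: complex)"
definition "av4 = (\<lambda>k::4. if k = 0 then l2/3 else if k = 2 then - l0/3 else 0 :: complex)"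
definition "av5 = (\<lambda>k::4. if k = 1 then l2/3 else if k = 2 then - l1/3 else 0 :: complex)"
definition "av6 = (\<lambda>k::4. if k = 3 then -1/3 else 0 :: complex)"

definition "P3 = mconst l1 * mvar 0 ^ 2 - mconst l0 * mvar 1 ^ 2"
definition "P4 = mconst l2 * mvar 0 ^ 2 - mconst l0 * mvar 2 ^ 2"
definition "P5 = mconst l2 * mvar 1 ^ 2 - mconst l1 * mvar 2 ^ 2"

lemma Q0: "Qpoly fp av0 = P0" by (simp add: Qpoly_eq av0_def)
lemma Q1: "Qpoly fp av1 = P1" by (simp add: Qpoly_eq av1_def)
lemma Q2: "Qpoly fp av2 = P2" by (simp add: Qpoly_eq av2_def)
lemma Q3: "Qpoly fp av3 = P3"
  by (simp add: Qpoly_eq av3_def P3_def P0_def P1_def mconst_mult mconst_uminus algebra_simps)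
lemma Q4: "Qpoly fp av4 = P4"
  by (simp add: Qpoly_eq av4_def P4_def P0_def P2_def mconst_mult mconst_uminus algebra_simps)
lemma Q5: "Qpoly fp av5 = P5"
  by (simp add: Qpoly_eq av5_def P5_def P1_def P2_def mconst_mult mconst_uminus algebra_simps)
lemma Q6: "Qpoly fp av6 = P6" by (simp add: Qpoly_eq av6_def mconst_uminus)


lemma fun4: "f 0 = g 0 \<Longrightarrow> f 1 = g 1 \<Longrightarrow> f 2 = g 2 \<Longrightarrow> f 3 = g 3 \<Longrightarrow> f = (g :: 4 \<Rightarrow> 'a)"
proof (rule ext)
  fix x :: 4
  assume "f 0 = g 0" "f 1 = g 1" "f 2 = g 2" "f 3 = g 3"
  then show "f x = g x" using in4[of x] by (elim disjE) simp_all
qed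

lemma peq: "c \<noteq> 0 \<Longrightarrow> a = (\<lambda>k. c * b k) \<Longrightarrow> proj_eq (Qpoly fp b) (Qpoly fp a)"
  unfolding proj_eq_def by (simp add: Qpoly_scale) blast

lemma npeq: assumes "\<And>c. c \<noteq> 0 \<Longrightarrow> a = (\<lambda>k. c * b k) \<Longrightarrow> False"
  shows "\<not> proj_eq (Qpoly fp b) (Qpoly fp a)"
proof
  assume "proj_eq (Qpoly fp b) (Qpoly fp a)"
  then obtain c where c: "c \<noteq> 0" "Qpoly fp a = mconst c * Qpoly fp b" unfolding proj_eq_def by blast
  then have "Qpoly fp a = Qpoly fp (\<lambda>k. c * b k)" by (simp add: Qpoly_scale)
  then have "a = (\<lambda>k. c * b k)" by (rule Qpoly_inj)
  then show False using c(1) assms by blast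
qed

lemma mem_hp: assumes "av \<noteq> (\<lambda>_. 0)" "\<And>r c. minor3 (Mg av l0 l1 l2) r c = 0"
  shows "Qpoly fp av \<in> hess_points fp"
  unfolding hess_points_def Hspace_def using assms Qpoly_nz rank_Qpoly by auto

lemma cover: assumes "Q \<in> hess_points fp"
  shows "\<exists>P\<in>{Qpoly fp av0, Qpoly fp av1, Qpoly fp av2, Qpoly fp av3, Qpoly fp av4, Qpoly fp av5, Qpoly fp av6}. proj_eq P Q"
proof -
  obtain a where Q: "Q = Qpoly fp a" "Q \<noteq> 0" "rank_le2 Q"
    using assms unfolding hess_points_def Hspace_def by auto
  have anz: "a \<noteq> (\<lambda>_. 0)" using Q Qpoly_zero by auto
  have m: "minor3 (Mg a l0 l1 l2) r c = 0" for r c using Q rank_Qpoly by simp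
  have h33: "a 0 * a 1 * a 2 = 0" using m[of 3 3] by (simp add: minor_3_3)
  have h01: "a 2 * a 3 = 0" using m[of 0 1] nz by (simp add: minor_0_1)
  have h02: "a 1 * a 3 = 0" using m[of 0 2] nz by (simp add: minor_0_2)
  have h12: "a 0 * a 3 = 0" using m[of 1 2] nz by (simp add: minor_1_2)
  have h00: "a 3 = 0 \<Longrightarrow> a 1 * a 2 * (l0 * a 0 + l1 * a 1 + l2 * a 2) = 0"
    using m[of 0 0] unfolding minor_0_0 by algebra
  have h11: "a 3 = 0 \<Longrightarrow> a 0 * a 2 * (l0 * a 0 + l1 * a 1 + l2 * a 2) = 0"
    using m[of 1 1] unfolding minor_1_1 by algebra
  have h22: "a 3 = 0 \<Longrightarrow> a 0 * a 1 * (l0 * a 0 + l1 * a 1 + l2 * a 2) = 0"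
    using m[of 2 2] unfolding minor_2_2 by algebra
  show ?thesis
  proof (cases "a 3 = 0")
    case False
    then have z: "a 0 = 0" "a 1 = 0" "a 2 = 0" using h01 h02 h12 by simp_all
    have "proj_eq (Qpoly fp av6) (Qpoly fp a)"
      by (rule peq[where c = "- 3 * a 3"]) (use False z in \<open>auto intro!: fun4 simp: av6_def\<close>)
    then show ?thesis using Q by blast
  next
    case True
    note h00 = h00[OF True] and h11 = h11[OF True] and h22 = h22[OF True]
    have "a 0 \<noteq> 0 \<or> a 1 \<noteq> 0 \<or> a 2 \<noteq> 0"
    proof (rule ccontr)
      assume "\<not> (a 0 \<noteq> 0 \<or> a 1 \<noteq> 0 \<or> a 2 \<noteq> 0)"
      then have "a = (\<lambda>_. 0)" using True by (intro fun4) auto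
      then show False using anz by simp
    qed
    then consider (c0) "a 0 \<noteq> 0" "a 1 = 0" "a 2 = 0" | (c1) "a 0 = 0" "a 1 \<noteq> 0" "a 2 = 0"
      | (c2) "a 0 = 0" "a 1 = 0" "a 2 \<noteq> 0" | (c3) "a 0 \<noteq> 0" "a 1 \<noteq> 0" "a 2 = 0"
      | (c4) "a 0 \<noteq> 0" "a 1 = 0" "a 2 \<noteq> 0" | (c5) "a 0 = 0" "a 1 \<noteq> 0" "a 2 \<noteq> 0"
      using h33 by auto
    then show ?thesis
    proof cases
      case c0
      have "proj_eq (Qpoly fp av0) (Qpoly fp a)"
        by (rule peq[where c = "3 * a 0"]) (use True c0 in \<open>auto intro!: fun4 simp: av0_def\<close>)
      then show ?thesis using Q by blast
    next
      case c1
      have "proj_eq (Qpoly fp av1) (Qpoly fp a)"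
        by (rule peq[where c = "3 * a 1"]) (use True c1 in \<open>auto intro!: fun4 simp: av1_def\<close>)
      then show ?thesis using Q by blast
    next
      case c2
      have "proj_eq (Qpoly fp av2) (Qpoly fp a)"
        by (rule peq[where c = "3 * a 2"]) (use True c2 in \<open>auto intro!: fun4 simp: av2_def\<close>)
      then show ?thesis using Q by blast
    next
      case c3
      have L: "l0 * a 0 + l1 * a 1 = 0" using h22 c3 by simp
      have "proj_eq (Qpoly fp av3) (Qpoly fp a)"
      proof (rule peq[where c = "3 * a 0 / l1"])
        show "3 * a 0 / l1 \<noteq> 0" using c3 nz by simp
        have "a 1 = - (l0 * a 0) / l1" using L nz by (simp add: field_simps add_eq_0_iff)
        then show "a = (\<lambda>k. 3 * a 0 / l1 * av3 k)" using True c3 nz by (intro fun4) (simp_all add: av3_def)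
      qed
      then show ?thesis using Q by blast
    next
      case c4
      have L: "l0 * a 0 + l2 * a 2 = 0" using h11 c4 by simp
      have "proj_eq (Qpoly fp av4) (Qpoly fp a)"
      proof (rule peq[where c = "3 * a 0 / l2"])
        show "3 * a 0 / l2 \<noteq> 0" using c4 nz by simp
        have "a 2 = - (l0 * a 0) / l2" using L nz by (simp add: field_simps add_eq_0_iff)
        then show "a = (\<lambda>k. 3 * a 0 / l2 * av4 k)" using True c4 nz by (intro fun4) (simp_all add: av4_def)
      qed
      then show ?thesis using Q by blast
    next
      case c5
      have L: "l1 * a 1 + l2 * a 2 = 0" using h00 c5 by simp
      have "proj_eq (Qpoly fp av5) (Qpoly fp a)"
      proof (rule peq[where c = "3 * a 1 / l2"])
        show "3 * a 1 / l2 \<noteq> 0" using c5 nz by simp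
        have "a 2 = - (l1 * a 1) / l2" using L nz by (simp add: field_simps add_eq_0_iff)
        then show "a = (\<lambda>k. 3 * a 1 / l2 * av5 k)" using True c5 nz by (intro fun4) (simp_all add: av5_def)
      qed
      then show ?thesis using Q by blast
    qed
  qed
qed


definition "AV = [av0, av1, av2, av3, av4, av5, av6]"

lemma less7: "i < (7::nat) \<Longrightarrow> i = 0 \<or> i = 1 \<or> i = 2 \<or> i = 3 \<or> i = 4 \<or> i = 5 \<or> i = 6"
  by linarith

lemma AVe: "AV = [(\<lambda>k::4. if k = 0 then 1/3 else 0 :: complex), (\<lambda>k::4. if k = 1 then 1/3 else 0 :: complex),
   (\<lambda>k::4. if k = 2 then 1/3 else 0 :: complex),
   (\<lambda>k::4. if k = 0 then l1/3 else if k = 1 then - l0/3 else 0 :: complex),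
   (\<lambda>k::4. if k = 0 then l2/3 else if k = 2 then - l0/3 else 0 :: complex),
   (\<lambda>k::4. if k = 1 then l2/3 else if k = 2 then - l1/3 else 0 :: complex),
   (\<lambda>k::4. if k = 3 then -1/3 else 0 :: complex)]"
  by (simp add: AV_def av0_def av1_def av2_def av3_def av4_def av5_def av6_def)

lemma AV_distinct: assumes "i < 7" "j < 7" "i \<noteq> j" "c \<noteq> 0" "AV ! j = (\<lambda>k. c * (AV ! i) k)"
  shows False
proof -
  have e: "(AV ! j) k = c * (AV ! i) k" for k using assms(5) by (rule fun_cong)
  note E = e[of 0, unfolded AVe] e[of 1, unfolded AVe] e[of 2, unfolded AVe] e[of 3, unfolded AVe]
  from less7[OF assms(1)] less7[OF assms(2)] assms(3) assms(4) nz E show False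
    by (elim disjE) simp_all
qed

lemma distinct_pts: "\<forall>i<7. \<forall>j<7. i \<noteq> j \<longrightarrow> \<not> proj_eq (Qpoly fp (AV ! i)) (Qpoly fp (AV ! j))"
proof (intro allI impI)
  fix i j :: nat assume ij: "i < 7" "j < 7" "i \<noteq> j"
  show "\<not> proj_eq (Qpoly fp (AV ! i)) (Qpoly fp (AV ! j))"
    by (rule npeq) (rule AV_distinct[OF ij])
qed

lemma mins0: "minor3 (Mg av0 l0 l1 l2) r c = 0"
  using in4[of r] in4[of c] by (elim disjE) (simp_all add: minor_simps av0_def power2_eq_square)

lemma mins1: "minor3 (Mg av1 l0 l1 l2) r c = 0"
  using in4[of r] in4[of c] by (elim disjE) (simp_all add: minor_simps av1_def power2_eq_square)

lemma mins2: "minor3 (Mg av2 l0 l1 l2) r c = 0"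
  using in4[of r] in4[of c] by (elim disjE) (simp_all add: minor_simps av2_def power2_eq_square)

lemma mins3: "minor3 (Mg av3 l0 l1 l2) r c = 0"
  using in4[of r] in4[of c] by (elim disjE) (simp_all add: minor_simps av3_def power2_eq_square)

lemma mins4: "minor3 (Mg av4 l0 l1 l2) r c = 0"
  using in4[of r] in4[of c] by (elim disjE) (simp_all add: minor_simps av4_def power2_eq_square)

lemma mins5: "minor3 (Mg av5 l0 l1 l2) r c = 0"
  using in4[of r] in4[of c] by (elim disjE) (simp_all add: minor_simps av5_def power2_eq_square)

lemma mins6: "minor3 (Mg av6 l0 l1 l2) r c = 0"
  using in4[of r] in4[of c] by (elim disjE) (simp_all add: minor_simps av6_def power2_eq_square)

lemma AV_mem: "i < 7 \<Longrightarrow> Qpoly fp (AV ! i) \<in> hess_points fp"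
proof -
  assume i: "i < 7"
  have nzf: "AV ! i \<noteq> (\<lambda>_. 0)"
  proof
    assume e: "AV ! i = (\<lambda>_. 0)"
    have "(AV ! i) k = 0" for k using e by simp
    note E = this[of 0, unfolded AVe] this[of 1, unfolded AVe] this[of 2, unfolded AVe] this[of 3, unfolded AVe]
    from less7[OF i] nz E show False
      by (elim disjE) simp_all
  qed
  have mins: "minor3 (Mg (AV ! i) l0 l1 l2) r c = 0" for r c
    using less7[OF i] mins0 mins1 mins2 mins3 mins4 mins5 mins6 unfolding AV_def
    by (elim disjE) simp_all
  show ?thesis by (rule mem_hp[OF nzf mins])
qed

lemma hm_of:
  assumes "\<And>j N. av j \<noteq> 0 \<Longrightarrow> N \<ge> 2 \<Longrightarrow>
      quot_dim (ideal_gen (insert (mvar j - 1) (hess_minors fp) \<union> mpow (\<lambda>t. av t / av j) N)) k"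
  shows "hess_mult fp (Qpoly fp av) k"
  unfolding hess_mult_def
proof (intro allI impI)
  fix a assume "Qpoly fp a = Qpoly fp av"
  then have a: "a = av" by (rule Qpoly_inj)
  show "proj_length (hess_minors fp) a k"
    unfolding proj_length_def local_length_def a using assms by blast
qed

lemma hm0: "hess_mult fp (Qpoly fp av0) 2"
proof (rule hm_of)
  fix j N assume j: "av0 j \<noteq> 0" and N: "(N::nat) \<ge> 2"
  then have "j = 0" using in4[of j] by (auto simp: av0_def)
  then show "quot_dim (ideal_gen (insert (mvar j - 1) (hess_minors fp) \<union> mpow (\<lambda>t. av0 t / av0 j) N)) 2"
    using chart_dbl_0[OF _ _ _ _ N, of "\<lambda>t. av0 t / av0 j"] by (simp add: av0_def)
qed

lemma hm1: "hess_mult fp (Qpoly fp av1) 2"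
proof (rule hm_of)
  fix j N assume j: "av1 j \<noteq> 0" and N: "(N::nat) \<ge> 2"
  then have "j = 1" using in4[of j] by (auto simp: av1_def)
  then show "quot_dim (ideal_gen (insert (mvar j - 1) (hess_minors fp) \<union> mpow (\<lambda>t. av1 t / av1 j) N)) 2"
    using chart_dbl_1[OF _ _ _ _ N, of "\<lambda>t. av1 t / av1 j"] by (simp add: av1_def)
qed

lemma hm2: "hess_mult fp (Qpoly fp av2) 2"
proof (rule hm_of)
  fix j N assume j: "av2 j \<noteq> 0" and N: "(N::nat) \<ge> 2"
  then have "j = 2" using in4[of j] by (auto simp: av2_def)
  then show "quot_dim (ideal_gen (insert (mvar j - 1) (hess_minors fp) \<union> mpow (\<lambda>t. av2 t / av2 j) N)) 2"
    using chart_dbl_2[OF _ _ _ _ N, of "\<lambda>t. av2 t / av2 j"] by (simp add: av2_def)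
qed

lemma hm3: "hess_mult fp (Qpoly fp av3) 1"
proof (rule hm_of)
  fix j N assume j: "av3 j \<noteq> 0" and N: "(N::nat) \<ge> 2"
  then have "j = 0 \<or> j = 1" using in4[of j] by (auto simp: av3_def)
  then show "quot_dim (ideal_gen (insert (mvar j - 1) (hess_minors fp) \<union> mpow (\<lambda>t. av3 t / av3 j) N)) 1"
  proof
    assume "j = 0" then show ?thesis
      using chart_s_0_1[OF _ _ _ _ N, of "\<lambda>t. av3 t / av3 j"] nz by (simp add: av3_def)
  next
    assume "j = 1" then show ?thesis
      using chart_s_1_0[OF _ _ _ _ N, of "\<lambda>t. av3 t / av3 j"] nz by (simp add: av3_def)
  qed
qed

lemma hm4: "hess_mult fp (Qpoly fp av4) 1"
proof (rule hm_of)
  fix j N assume j: "av4 j \<noteq> 0" and N: "(N::nat) \<ge> 2"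
  then have "j = 0 \<or> j = 2" using in4[of j] by (auto simp: av4_def)
  then show "quot_dim (ideal_gen (insert (mvar j - 1) (hess_minors fp) \<union> mpow (\<lambda>t. av4 t / av4 j) N)) 1"
  proof
    assume "j = 0" then show ?thesis
      using chart_s_0_2[OF _ _ _ _ N, of "\<lambda>t. av4 t / av4 j"] nz by (simp add: av4_def)
  next
    assume "j = 2" then show ?thesis
      using chart_s_2_0[OF _ _ _ _ N, of "\<lambda>t. av4 t / av4 j"] nz by (simp add: av4_def)
  qed
qed

lemma hm5: "hess_mult fp (Qpoly fp av5) 1"
proof (rule hm_of)
  fix j N assume j: "av5 j \<noteq> 0" and N: "(N::nat) \<ge> 2"
  then have "j = 1 \<or> j = 2" using in4[of j] by (auto simp: av5_def)
  then show "quot_dim (ideal_gen (insert (mvar j - 1) (hess_minors fp) \<union> mpow (\<lambda>t. av5 t / av5 j) N)) 1"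
  proof
    assume "j = 1" then show ?thesis
      using chart_s_1_2[OF _ _ _ _ N, of "\<lambda>t. av5 t / av5 j"] nz by (simp add: av5_def)
  next
    assume "j = 2" then show ?thesis
      using chart_s_2_1[OF _ _ _ _ N, of "\<lambda>t. av5 t / av5 j"] nz by (simp add: av5_def)
  qed
qed

lemma hm6: "hess_mult fp (Qpoly fp av6) 1"
proof (rule hm_of)
  fix j N assume j: "av6 j \<noteq> 0" and N: "(N::nat) \<ge> 2"
  then have "j = 3" using in4[of j] by (auto simp: av6_def)
  then show "quot_dim (ideal_gen (insert (mvar j - 1) (hess_minors fp) \<union> mpow (\<lambda>t. av6 t / av6 j) N)) 1"
    using chart_s_3[OF _ _ _ _ N, of "\<lambda>t. av6 t / av6 j"] by (simp add: av6_def)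
qed


lemma proj_eq_trans: assumes "proj_eq T P" "proj_eq T P'" shows "proj_eq P P'"
proof -
  obtain c where c: "c \<noteq> 0" "P = mconst c * T" using assms(1) unfolding proj_eq_def by blast
  obtain d where d: "d \<noteq> 0" "P' = mconst d * T" using assms(2) unfolding proj_eq_def by blast
  have "P' = mconst (d / c) * P" using c d by (simp add: mult.assoc[symmetric] mconst_mult[symmetric])
  then show ?thesis unfolding proj_eq_def using c d by (intro exI[of _ "d / c"]) simp
qed

lemma disc: assumes cov: "\<forall>Q\<in>hess_points f. \<exists>P\<in>set L. proj_eq P Q" and len: "length L = 7"
  shows "hessian_discriminant f"
  unfolding hessian_discriminant_def
proof
  assume "\<exists>S. finite S \<and> card S = 10 \<and> S \<subseteq> hess_points f \<and> (\<forall>P\<in>S. \<forall>Q\<in>S. proj_eq P Q \<longrightarrow> P = Q)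
      \<and> (\<forall>Q\<in>hess_points f. \<exists>P\<in>S. proj_eq P Q) \<and> (\<forall>P\<in>S. hess_mult f P 1)"
  then obtain S where S: "finite S" "card S = 10" "S \<subseteq> hess_points f" "\<forall>P\<in>S. \<forall>Q\<in>S. proj_eq P Q \<longrightarrow> P = Q"
    by blast
  define g where "g Q = (SOME P. P \<in> set L \<and> proj_eq P Q)" for Q
  have g: "g Q \<in> set L \<and> proj_eq (g Q) Q" if "Q \<in> S" for Q
    unfolding g_def by (rule someI_ex) (use cov S(3) that in blast)
  have "inj_on g S"
  proof (rule inj_onI)
    fix P Q assume "P \<in> S" "Q \<in> S" "g P = g Q"
    then have "proj_eq P Q" using g[of P] g[of Q] proj_eq_trans by metis
    then show "P = Q" using S(4) \<open>P \<in> S\<close> \<open>Q \<in> S\<close> by blast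
  qed
  moreover have "g ` S \<subseteq> set L" using g by blast
  ultimately have "card S \<le> card (set L)" by (metis card_inj_on_le finite_set)
  also have "\<dots> \<le> 7" using card_length[of L] len by simp
  finally show False using S(2) by simp
qed

end


theorem mainTheorem5:
  fixes l0 l1 l2 :: complex and f :: mpoly and pts :: "mpoly list"
  assumes "l0 \<noteq> 0" and "l1 \<noteq> 0" and "l2 \<noteq> 0"
    and "\<forall>r0 r1 r2. r0^2 = l0 \<and> r1^2 = l1 \<and> r2^2 = l2 \<longrightarrow> 2 * (r0^3 + r1^3 + r2^3) \<noteq> 1"
    and "f = mvar 0 ^ 3 + mvar 1 ^ 3 + mvar 2 ^ 3
             - mvar 3 ^ 2 * (mconst (3 * l0) * mvar 0 + mconst (3 * l1) * mvar 1
                             + mconst (3 * l2) * mvar 2 - mvar 3)"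
    and "pts = [mvar 0 ^ 2 - mconst l0 * mvar 3 ^ 2,
                mvar 1 ^ 2 - mconst l1 * mvar 3 ^ 2,
                mvar 2 ^ 2 - mconst l2 * mvar 3 ^ 2,
                mconst l1 * mvar 0 ^ 2 - mconst l0 * mvar 1 ^ 2,
                mconst l2 * mvar 0 ^ 2 - mconst l0 * mvar 2 ^ 2,
                mconst l2 * mvar 1 ^ 2 - mconst l1 * mvar 2 ^ 2,
                mvar 3 * (mconst (2 * l0) * mvar 0 + mconst (2 * l1) * mvar 1
                          + mconst (2 * l2) * mvar 2 - mvar 3)]"
  shows "(\<forall>i<7. \<forall>j<7. i \<noteq> j \<longrightarrow> \<not> proj_eq (pts ! i) (pts ! j))
       \<and> set pts \<subseteq> hess_points f
       \<and> (\<forall>Q\<in>hess_points f. \<exists>P\<in>set pts. proj_eq P Q)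
       \<and> (\<forall>i<3. hess_mult f (pts ! i) 2)
       \<and> (\<forall>i. 3 \<le> i \<and> i < 7 \<longrightarrow> hess_mult f (pts ! i) 1)
       \<and> hessian_discriminant f"
proof -
  interpret S: setting l0 l1 l2 using assms(1-3) by unfold_locales
  have f: "f = S.fp" using assms(5) by (simp add: S.fp_def)
  have pts: "pts = map (Qpoly S.fp) S.AV"
    using assms(6) by (simp add: S.AV_def S.Q0 S.Q1 S.Q2 S.Q3 S.Q4 S.Q5 S.Q6
        S.P0_def S.P1_def S.P2_def S.P3_def S.P4_def S.P5_def S.P6_def)
  have lenAV: "length S.AV = 7" by (simp add: S.AV_def)
  have nth: "pts ! i = Qpoly S.fp (S.AV ! i)" if "i < 7" for i
    using that lenAV by (simp add: pts)
  have A: "\<forall>i<7. \<forall>j<7. i \<noteq> j \<longrightarrow> \<not> proj_eq (pts ! i) (pts ! j)"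
    using S.distinct_pts nth by simp
  have B: "set pts \<subseteq> hess_points f"
  proof
    fix P assume "P \<in> set pts"
    then obtain i where "i < length pts" "P = pts ! i" by (auto simp: in_set_conv_nth)
    then have "i < 7" "P = Qpoly S.fp (S.AV ! i)" using lenAV nth by (auto simp: pts)
    then show "P \<in> hess_points f" using S.AV_mem f by simp
  qed
  have setpts: "set pts = {Qpoly S.fp S.av0, Qpoly S.fp S.av1, Qpoly S.fp S.av2, Qpoly S.fp S.av3,
      Qpoly S.fp S.av4, Qpoly S.fp S.av5, Qpoly S.fp S.av6}"
    by (simp add: pts S.AV_def)
  have C: "\<forall>Q\<in>hess_points f. \<exists>P\<in>set pts. proj_eq P Q"
    unfolding setpts f using S.cover by blast
  have D: "\<forall>i<3. hess_mult f (pts ! i) 2"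
  proof (intro allI impI)
    fix i :: nat assume "i < 3"
    then have "i = 0 \<or> i = 1 \<or> i = 2" by linarith
    then show "hess_mult f (pts ! i) 2"
      using S.hm0 S.hm1 S.hm2 by (elim disjE) (simp_all add: f pts S.AV_def)
  qed
  have E: "\<forall>i. 3 \<le> i \<and> i < 7 \<longrightarrow> hess_mult f (pts ! i) 1"
  proof (intro allI impI)
    fix i :: nat assume "3 \<le> i \<and> i < 7"
    then have "i = 3 \<or> i = 4 \<or> i = 5 \<or> i = 6" by linarith
    then show "hess_mult f (pts ! i) 1"
      using S.hm3 S.hm4 S.hm5 S.hm6 by (elim disjE) (simp_all add: f pts S.AV_def)
  qed
  have F: "hessian_discriminant f"
    by (rule S.disc[OF C]) (simp add: pts lenAV)
  show ?thesis using A B C D E F by blast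
qed


end
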